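(* If a dual-convex $m\times n$ net in $I^3$ is flexible in $I^3$, then every dual-convex $m\times n$ net that is a Combescure transformation of it, and every dual-convex $m\times n$ net obtained from it by a dual-affine transformation, is flexible in $I^3$.
   Context: $I^3$ is $\mathbb{R}^3$ with coordinates $(x,y,z)$; isotropic = parallel to the $z$-axis; top view of $(x,y,z)$ is $(x,y)$. Isotropic congruences: maps $\mathbf{x}\mapsto A\mathbf{x}+\mathbf{b}$, $A=\begin{pmatrix}\cos\phi&-\sin\phi&0\\ \sin\phi&\cos\phi&0\\ c_1&c_2&1\end{pmatrix}$. Metric duality: point $P=(P^1,P^2,P^3)\leftrightarrow$ plane $P^*\colon z=P^1x+P^2y-P^3$. An $m\times n$ net: points $F_{ij}$, $0\le i\le m,0\le j\le n$, with $F_{ij},F_{i+1,j},F_{i+1,j+1},F_{i,j+1}$ consecutive vertices of a convex planar quadrilateral (face $p_{ij}$) for all $0\le i<m,0\le j<n$. Boundary vertices: $i\in\{0,m\}$ or $j\in\{0,n\}$; consecutive faces around non-boundary $F_{ij}$: $p_{i-1,j-1},p_{i,j-1},p_{ij},p_{i-1,j}$. Convex 4-hedral angle with vertex $O$, flat angles, admissible (isotropic line through $O$ meets interior) as usual; dual-convex: $m,n\ge2$ and at each non-boundary vertex the four consecutive face planes are the planes of four consecutive flat angles of an admissible convex 4-hedral angle. Curvature at non-boundary vertex with consecutive faces $p_1..p_4$: $\Omega=\frac12\sum_{k=1}^4\det(\overline{p_k^*},\overline{p_{k+1}^*})$, $p_5=p_1$. Flexible in $I^3$: there is a continuous family of $m\times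 n$ nets $F_{ij}(t)$, $t\in[0,1]$, $F_{ij}(0)=F_{ij}$, with corresponding faces isotropically congruent, corresponding non-boundary vertices of equal curvature, and not for every $t$ an isotropic congruence $C_t$ with $F_{ij}(t)=C_t(F_{ij})$ for all $i,j$. Combescure transformation: a net with the same index set whose corresponding edges are parallel. Dual-affine transformation: a projective transformation of the projective closure of $I^3$ that keeps the $z$-direction (fixes the point at infinity of the $z$-axis). *)

theory Defs
  imports "HOL-Analysis.Analysis"
begin

text \<open>Points of the isotropic space I^3 = R^3 with coordinates (x,y,z).\<close>
type_synonym pt = "real \<times> real \<times> real"

definition px :: "pt \<Rightarrow> real" where "px p = fst p"
definition py :: "pt \<Rightarrow> real" where "py p = fst (snd p)"
definition pz :: "pt \<Rightarrow> real" where "pz p = snd (snd p)"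

definition iso_cong :: "real \<Rightarrow> real \<Rightarrow> real \<Rightarrow> pt \<Rightarrow> pt \<Rightarrow> pt" where
  "iso_cong phi c1 c2 b p =
     (cos phi * px p - sin phi * py p + px b,
      sin phi * px p + cos phi * py p + py b,
      c1 * px p + c2 * py p + pz p + pz b)"

definition convex_quad :: "pt \<Rightarrow> pt \<Rightarrow> pt \<Rightarrow> pt \<Rightarrow> bool" where
  "convex_quad A B C D \<longleftrightarrow>
     \<not> collinear {A, B, C} \<and>
     (\<exists>s t. 0 < s \<and> s < 1 \<and> 0 < t \<and> t < 1 \<and>
            (1 - s) *\<^sub>R A + s *\<^sub>R C = (1 - t) *\<^sub>R B + t *\<^sub>R D)"

text \<open>Nets are functions nat => nat => pt; only indices 0..m, 0..n matter.\<close>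
definition is_net :: "nat \<Rightarrow> nat \<Rightarrow> (nat \<Rightarrow> nat \<Rightarrow> pt) \<Rightarrow> bool" where
  "is_net m n F \<longleftrightarrow>
     (\<forall>i<m. \<forall>j<n. convex_quad (F i j) (F (Suc i) j) (F (Suc i) (Suc j)) (F i (Suc j)))"

definition interior_vertex :: "nat \<Rightarrow> nat \<Rightarrow> nat \<Rightarrow> nat \<Rightarrow> bool" where
  "interior_vertex m n i j \<longleftrightarrow> 0 < i \<and> i < m \<and> 0 < j \<and> j < n"

definition face_plane :: "(nat \<Rightarrow> nat \<Rightarrow> pt) \<Rightarrow> nat \<Rightarrow> nat \<Rightarrow> pt set" where
  "face_plane F i j = affine hull {F i j, F (Suc i) j, F (Suc i) (Suc j), F i (Suc j)}"

text \<open>Metric dual of a non-isotropic plane z = a x + b y - c is the point (a,b,c).\<close>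
definition plane_dual :: "pt set \<Rightarrow> pt" where
  "plane_dual P = (THE d. P = {x. pz x = px d * px x + py d * py x - pz d})"

definition det2 :: "real \<times> real \<Rightarrow> real \<times> real \<Rightarrow> real" where
  "det2 u v = fst u * snd v - snd u * fst v"

definition top_dual :: "pt set \<Rightarrow> real \<times> real" where
  "top_dual P = (px (plane_dual P), py (plane_dual P))"

definition vertex_face :: "(nat \<Rightarrow> nat \<Rightarrow> pt) \<Rightarrow> nat \<Rightarrow> nat \<Rightarrow> nat \<Rightarrow> pt set" where
  "vertex_face F i j k =
     (if k = 0 then face_plane F (i - 1) (j - 1)
      else if k = 1 then face_plane F i (j - 1)
      else if k = 2 then face_plane F i j
      else face_plane F (i - 1) j)"

definition curvature :: "(nat \<Rightarrow> nat \<Rightarrow> pt) \<Rightarrow> nat \<Rightarrow> nat \<Rightarrow> real" where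
  "curvature F i j =
     (1/2) * (\<Sum>k<4. det2 (top_dual (vertex_face F i j k))
                          (top_dual (vertex_face F i j ((k + 1) mod 4))))"

definition det3 :: "pt \<Rightarrow> pt \<Rightarrow> pt \<Rightarrow> real" where
  "det3 a b c =
     px a * (py b * pz c - pz b * py c)
   - py a * (px b * pz c - pz b * px c)
   + pz a * (px b * py c - py b * px c)"

text \<open>Convex 4-hedral angle with edge directions e 0, .., e 3 (cyclic order):
  for each flat angle (e k, e (k+1)), the other two edges lie strictly on the same side
  of its plane.\<close>
definition convex_4hedral :: "(nat \<Rightarrow> pt) \<Rightarrow> bool" where
  "convex_4hedral e \<longleftrightarrow>
     (\<forall>k<4. det3 (e k) (e ((k+1) mod 4)) (e ((k+2) mod 4))
            * det3 (e k) (e ((k+1) mod 4)) (e ((k+3) mod 4)) > 0)"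

text \<open>v (relative to the vertex) points into the interior of the angle.\<close>
definition in_angle_interior :: "(nat \<Rightarrow> pt) \<Rightarrow> pt \<Rightarrow> bool" where
  "in_angle_interior e v \<longleftrightarrow>
     (\<forall>k<4. det3 (e k) (e ((k+1) mod 4)) v
            * det3 (e k) (e ((k+1) mod 4)) (e ((k+2) mod 4)) > 0)"

text \<open>Admissible: the isotropic line through the vertex meets the interior.\<close>
definition admissible_4hedral :: "(nat \<Rightarrow> pt) \<Rightarrow> bool" where
  "admissible_4hedral e \<longleftrightarrow> convex_4hedral e \<and> (\<exists>s. in_angle_interior e (0, 0, s))"

definition dual_convex_at :: "(nat \<Rightarrow> nat \<Rightarrow> pt) \<Rightarrow> nat \<Rightarrow> nat \<Rightarrow> bool" where
  "dual_convex_at F i j \<longleftrightarrow>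
     (\<exists>v0 e. admissible_4hedral e \<and>
        (\<forall>k<4. vertex_face F i j k =
                 {v0 + s *\<^sub>R e k + t *\<^sub>R e ((k+1) mod 4) | s t. True}))"

definition dual_convex :: "nat \<Rightarrow> nat \<Rightarrow> (nat \<Rightarrow> nat \<Rightarrow> pt) \<Rightarrow> bool" where
  "dual_convex m n F \<longleftrightarrow> 2 \<le> m \<and> 2 \<le> n \<and> is_net m n F \<and>
     (\<forall>i j. interior_vertex m n i j \<longrightarrow> dual_convex_at F i j)"

definition flexible :: "nat \<Rightarrow> nat \<Rightarrow> (nat \<Rightarrow> nat \<Rightarrow> pt) \<Rightarrow> bool" where
  "flexible m n F \<longleftrightarrow>
     (\<exists>Ft :: real \<Rightarrow> nat \<Rightarrow> nat \<Rightarrow> pt.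
        (\<forall>i\<le>m. \<forall>j\<le>n. continuous_on {0..1} (\<lambda>t. Ft t i j)) \<and>
        (\<forall>i\<le>m. \<forall>j\<le>n. Ft 0 i j = F i j) \<and>
        (\<forall>t\<in>{0..1}. is_net m n (Ft t)) \<and>
        (\<forall>t\<in>{0..1}. \<forall>i<m. \<forall>j<n. \<exists>phi c1 c2 b.
            \<forall>(k, l) \<in> {(i, j), (Suc i, j), (Suc i, Suc j), (i, Suc j)}.
               Ft t k l = iso_cong phi c1 c2 b (F k l)) \<and>
        (\<forall>t\<in>{0..1}. \<forall>i j. interior_vertex m n i j \<longrightarrow>
            curvature (Ft t) i j = curvature F i j) \<and>
        \<not> (\<forall>t\<in>{0..1}. \<exists>phi c1 c2 b. \<forall>i\<le>m. \<forall>j\<le>n.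
               Ft t i j = iso_cong phi c1 c2 b (F i j)))"

definition parallel_vec :: "pt \<Rightarrow> pt \<Rightarrow> bool" where
  "parallel_vec u v \<longleftrightarrow> (\<exists>c. v = c *\<^sub>R u) \<or> (\<exists>c. u = c *\<^sub>R v)"

definition combescure :: "nat \<Rightarrow> nat \<Rightarrow> (nat \<Rightarrow> nat \<Rightarrow> pt) \<Rightarrow> (nat \<Rightarrow> nat \<Rightarrow> pt) \<Rightarrow> bool" where
  "combescure m n F G \<longleftrightarrow>
     (\<forall>i<m. \<forall>j\<le>n. parallel_vec (F (Suc i) j - F i j) (G (Suc i) j - G i j)) \<and>
     (\<forall>i\<le>m. \<forall>j<n. parallel_vec (F i (Suc j) - F i j) (G i (Suc j) - G i j))"

text \<open>Projective transformations of the projective closure of R^3, via invertible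
  4x4 matrices on homogeneous coordinates (x,y,z,1).\<close>
definition hom :: "pt \<Rightarrow> real^4" where
  "hom p = (\<chi> k. if k = 1 then px p else if k = 2 then py p else if k = 3 then pz p else 1)"

definition dehom :: "real^4 \<Rightarrow> pt" where
  "dehom v = (v $ 1 / v $ 4, v $ 2 / v $ 4, v $ 3 / v $ 4)"

definition z_infinity :: "real^4" where
  "z_infinity = (\<chi> k. if k = 3 then 1 else 0)"

definition dual_affine :: "real^4^4 \<Rightarrow> bool" where
  "dual_affine M \<longleftrightarrow> invertible M \<and> (\<exists>c. M *v z_infinity = c *\<^sub>R z_infinity)"

definition dual_affine_image :: "nat \<Rightarrow> nat \<Rightarrow> (nat \<Rightarrow> nat \<Rightarrow> pt) \<Rightarrow> (nat \<Rightarrow> nat \<Rightarrow> pt) \<Rightarrow> bool" where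
  "dual_affine_image m n F G \<longleftrightarrow>
     (\<exists>M. dual_affine M \<and>
        (\<forall>i\<le>m. \<forall>j\<le>n. (M *v hom (F i j)) $ 4 \<noteq> 0 \<and> G i j = dehom (M *v hom (F i j))))"

end

theory Submission
  imports Defs
begin

definition aff :: "pt \<Rightarrow> pt \<Rightarrow> real" where
  "aff q p = px q * px p + py q * py p + pz q"

definition onpl :: "pt \<Rightarrow> pt \<Rightarrow> bool" where
  "onpl r p \<longleftrightarrow> pz p = aff r p"

definition tp :: "pt \<Rightarrow> real \<times> real" where
  "tp p = (px p, py p)"

definition ndeg :: "pt \<Rightarrow> pt \<Rightarrow> pt \<Rightarrow> bool" where
  "ndeg A B C \<longleftrightarrow> det2 (px B - px A, py B - py A) (px C - px A, py C - py A) \<noteq> 0"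

lemma pt_eq: "p = q \<longleftrightarrow> px p = px q \<and> py p = py q \<and> pz p = pz q"
  by (cases p; cases q) (auto simp: px_def py_def pz_def)

lemma pcomp[simp]: "px (a,b,c) = a" "py (a,b,c) = b" "pz (a,b,c) = c"
  by (simp_all add: px_def py_def pz_def)

lemma pcomp_ops[simp]:
  "px (p + q) = px p + px q" "py (p + q) = py p + py q" "pz (p + q) = pz p + pz q"
  "px (p - q) = px p - px q" "py (p - q) = py p - py q" "pz (p - q) = pz p - pz q"
  "px (c *\<^sub>R p) = c * px p" "py (c *\<^sub>R p) = c * py p" "pz (c *\<^sub>R p) = c * pz p"
  "px 0 = 0" "py 0 = 0" "pz 0 = 0" "px (-p) = - px p" "py (-p) = - py p" "pz (-p) = - pz p"
  by (simp_all add: px_def py_def pz_def)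

lemma det2_simp[simp]: "det2 (a,b) (c,d) = a * d - b * c"
  by (simp add: det2_def)

lemma cross0: "det2 (a1,a2) (b1,b2) \<noteq> 0 \<Longrightarrow> g1 * a1 + g2 * a2 = 0 \<Longrightarrow> g1 * b1 + g2 * b2 = 0
   \<Longrightarrow> g1 = 0 \<and> g2 = (0::real)"
proof -
  assume d: "det2 (a1,a2) (b1,b2) \<noteq> 0" and e1: "g1 * a1 + g2 * a2 = 0" and e2: "g1 * b1 + g2 * b2 = 0"
  have "g1 * (a1 * b2 - a2 * b1) = 0" using e1 e2 by algebra
  moreover have "g2 * (a1 * b2 - a2 * b1) = 0" using e1 e2 by algebra
  ultimately show ?thesis using d by simp
qed

lemma uniq_aff:
  assumes "ndeg A B C" "aff q A = aff q' A" "aff q B = aff q' B" "aff q C = aff q' C"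
  shows "q = q'"
proof -
  let ?g1 = "px q - px q'" and ?g2 = "py q - py q'"
  have "?g1 * (px B - px A) + ?g2 * (py B - py A) = 0" using assms(2,3) by (simp add: aff_def algebra_simps)
  moreover have "?g1 * (px C - px A) + ?g2 * (py C - py A) = 0" using assms(2,4) by (simp add: aff_def algebra_simps)
  ultimately have "?g1 = 0 \<and> ?g2 = 0" using cross0 assms(1) unfolding ndeg_def by blast
  then show ?thesis using assms(2) by (simp add: pt_eq aff_def)
qed

lemma affine_plane: "affine {p. onpl r p}"
proof -
  have "u *\<^sub>R x + v *\<^sub>R y \<in> {p. onpl r p}" if "onpl r x" "onpl r y" "u + v = 1" for x y :: pt and u v :: real
  proof -
    have "pz (u *\<^sub>R x + v *\<^sub>R y) = u * (px r * px x + py r * py x + pz r) + v * (px r * px y + py r * py y + pz r)"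
      using that by (simp add: onpl_def aff_def)
    also have "\<dots> = px r * px (u *\<^sub>R x + v *\<^sub>R y) + py r * py (u *\<^sub>R x + v *\<^sub>R y) + (u + v) * pz r"
      by (simp add: algebra_simps)
    finally show ?thesis using that(3) by (simp add: onpl_def aff_def)
  qed
  then show ?thesis unfolding affine_def by blast
qed

lemma hull_plane:
  assumes "onpl r A" "onpl r B" "onpl r C" "onpl r D" "ndeg A B C"
  shows "affine hull {A,B,C,D} = {p. onpl r p}"
proof
  show "affine hull {A,B,C,D} \<subseteq> {p. onpl r p}"
    using assms by (intro hull_minimal) (auto simp: affine_plane)
next
  show "{p. onpl r p} \<subseteq> affine hull {A,B,C,D}"
  proof
    fix p assume "p \<in> {p. onpl r p}"
    hence p: "onpl r p" by simp
    define a1 where "a1 = px B - px A" define a2 where "a2 = py B - py A"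
    define b1 where "b1 = px C - px A" define b2 where "b2 = py C - py A"
    define d where "d = a1 * b2 - a2 * b1"
    have d: "d \<noteq> 0" using assms(5) by (simp add: ndeg_def d_def a1_def a2_def b1_def b2_def)
    define x where "x = px p - px A" define y where "y = py p - py A"
    define s where "s = (x * b2 - y * b1) / d"
    define t where "t = (a1 * y - a2 * x) / d"
    have "s * a1 + t * b1 = ((x * b2 - y * b1) * a1 + (a1 * y - a2 * x) * b1) / d"
      unfolding s_def t_def by (simp add: add_divide_distrib)
    also have "\<dots> = x * d / d" by (simp add: d_def algebra_simps)
    finally have e1: "s * a1 + t * b1 = x" using d by simp
    have "s * a2 + t * b2 = ((x * b2 - y * b1) * a2 + (a1 * y - a2 * x) * b2) / d"
      unfolding s_def t_def by (simp add: add_divide_distrib)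
    also have "\<dots> = y * d / d" by (simp add: d_def algebra_simps)
    finally have e2: "s * a2 + t * b2 = y" using d by simp
    have "p = (1 - s - t) *\<^sub>R A + s *\<^sub>R B + t *\<^sub>R C"
    proof (simp add: pt_eq, intro conjI)
      show "px p = (1 - s - t) * px A + s * px B + t * px C"
        using e1 unfolding a1_def b1_def x_def by (simp add: algebra_simps)
      show "py p = (1 - s - t) * py A + s * py B + t * py C"
        using e2 unfolding a2_def b2_def y_def by (simp add: algebra_simps)
      show "pz p = (1 - s - t) * pz A + s * pz B + t * pz C"
        using assms(1,2,3) p e1 e2 unfolding a1_def b1_def x_def a2_def b2_def y_def onpl_def aff_def
        by (simp add: algebra_simps) algebra
    qed
    then have "p \<in> affine hull {A,B,C}" unfolding affine_hull_3 by force
    then show "p \<in> affine hull {A,B,C,D}"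
      by (meson hull_mono insert_mono subset_insertI subsetD)
  qed
qed

lemma plane_dual_eq: "plane_dual {p. onpl r p} = (px r, py r, - pz r)"
  unfolding plane_dual_def
proof (rule the_equality)
  show "{p. onpl r p} = {x. pz x = px (px r, py r, - pz r) * px x + py (px r, py r, - pz r) * py x - pz (px r, py r, - pz r)}"
    by (auto simp: onpl_def aff_def)
next
  fix d assume h: "{p. onpl r p} = {x. pz x = px d * px x + py d * py x - pz d}"
  have "\<And>p. onpl r p \<longleftrightarrow> pz p = px d * px p + py d * py p - pz d" using h by blast
  from this[of "(0,0,pz r)"] this[of "(1,0,px r + pz r)"] this[of "(0,1,py r + pz r)"]
  show "d = (px r, py r, - pz r)" by (simp add: onpl_def aff_def pt_eq)
qed

lemma top_dual_hull:
  assumes "onpl r A" "onpl r B" "onpl r C" "onpl r D" "ndeg A B C"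
  shows "top_dual (affine hull {A,B,C,D}) = (px r, py r)"
  using hull_plane[OF assms] by (simp add: top_dual_def plane_dual_eq)

definition Qd :: "real \<times> real \<Rightarrow> real \<times> real \<Rightarrow> real \<times> real \<Rightarrow> real \<times> real \<Rightarrow> real" where
  "Qd p0 p1 p2 p3 = det2 p0 p1 + det2 p1 p2 + det2 p2 p3 + det2 p3 p0"

definition fitface :: "(nat \<Rightarrow> nat \<Rightarrow> pt) \<Rightarrow> nat \<Rightarrow> nat \<Rightarrow> pt \<Rightarrow> bool" where
  "fitface H a b r \<longleftrightarrow> onpl r (H a b) \<and> onpl r (H (Suc a) b) \<and> onpl r (H (Suc a) (Suc b)) \<and> onpl r (H a (Suc b))"

definition ndegface :: "(nat \<Rightarrow> nat \<Rightarrow> pt) \<Rightarrow> nat \<Rightarrow> nat \<Rightarrow> bool" where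
  "ndegface H a b \<longleftrightarrow> ndeg (H a b) (H (Suc a) b) (H (Suc a) (Suc b))"

lemma top_dual_face:
  assumes "fitface H a b r" "ndegface H a b"
  shows "top_dual (face_plane H a b) = tp r"
  using assms top_dual_hull[of r "H a b" "H (Suc a) b" "H (Suc a) (Suc b)" "H a (Suc b)"]
  by (simp add: fitface_def ndegface_def face_plane_def tp_def)

lemma sum4: "(\<Sum>k<4::nat. f k) = f 0 + f 1 + f 2 + (f 3 :: real)"
  by (simp add: eval_nat_numeral)

lemma curvature_expand:
  assumes "interior_vertex m n i j"
  shows "curvature H i j = 1/2 * Qd (top_dual (face_plane H (i-1) (j-1))) (top_dual (face_plane H i (j-1)))
     (top_dual (face_plane H i j)) (top_dual (face_plane H (i-1) j))"
  unfolding curvature_def sum4 by (simp add: vertex_face_def Qd_def)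

lemma curv_fit:
  assumes "interior_vertex m n i j"
    "fitface H (i-1) (j-1) r0" "ndegface H (i-1) (j-1)"
    "fitface H i (j-1) r1" "ndegface H i (j-1)"
    "fitface H i j r2" "ndegface H i j"
    "fitface H (i-1) j r3" "ndegface H (i-1) j"
  shows "curvature H i j = 1/2 * Qd (tp r0) (tp r1) (tp r2) (tp r3)"
  using assms by (simp add: curvature_expand top_dual_face)

lemma ndeg_nc:
  assumes "onpl r A" "onpl r B" "onpl r C" "\<not> collinear {A,B,C}"
  shows "ndeg A B C"
proof (rule ccontr)
  assume "\<not> ndeg A B C"
  then have d0: "(px B - px A) * (py C - py A) - (py B - py A) * (px C - px A) = 0"
    by (simp add: ndeg_def)
  have zB: "pz B - pz A = px r * (px B - px A) + py r * (py B - py A)"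
    using assms(1,2) by (simp add: onpl_def aff_def algebra_simps)
  have zC: "pz C - pz A = px r * (px C - px A) + py r * (py C - py A)"
    using assms(1,3) by (simp add: onpl_def aff_def algebra_simps)
  have "collinear {A,B,C}"
  proof (cases "px B - px A = 0 \<and> py B - py A = 0")
    case True
    then have "B = A" using zB by (simp add: pt_eq)
    then show ?thesis by (simp add: collinear_2)
  next
    case False
    define nn where "nn = (px B - px A)^2 + (py B - py A)^2"
    have nn: "nn \<noteq> 0" using False unfolding nn_def by (simp add: sum_power2_eq_zero_iff)
    define c where "c = ((px C - px A) * (px B - px A) + (py C - py A) * (py B - py A)) / nn"
    have cx: "px C - px A = c * (px B - px A)"
    proof -
      have "c * (px B - px A) * nn = ((px C - px A) * (px B - px A) + (py C - py A) * (py B - py A)) * (px B - px A)"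
        using nn by (simp add: c_def)
      also have "\<dots> = (px C - px A) * nn" using d0 unfolding nn_def power2_eq_square by algebra
      finally show ?thesis using nn by simp
    qed
    have cy: "py C - py A = c * (py B - py A)"
    proof -
      have "c * (py B - py A) * nn = ((px C - px A) * (px B - px A) + (py C - py A) * (py B - py A)) * (py B - py A)"
        using nn by (simp add: c_def)
      also have "\<dots> = (py C - py A) * nn" using d0 unfolding nn_def power2_eq_square by algebra
      finally show ?thesis using nn by simp
    qed
    have "pz C - pz A = px r * (c * (px B - px A)) + py r * (c * (py B - py A))"
      using zC cx cy by simp
    also have "\<dots> = c * (px r * (px B - px A) + py r * (py B - py A))" by (simp add: algebra_simps)
    also have "\<dots> = c * (pz B - pz A)" using zB by simp
    finally have cz: "pz C - pz A = c * (pz B - pz A)" .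
    have "C - A = c *\<^sub>R (B - A)" using cx cy cz by (simp add: pt_eq algebra_simps)
    then have "collinear {0, B - A, C - A}" by (auto simp: collinear_lemma)
    then have "collinear {B,A,C}" by (subst collinear_3) auto
    then show ?thesis by (simp add: insert_commute)
  qed
  then show False using assms(4) by simp
qed

lemma param_fit:
  assumes "det2 (px a, py a) (px b, py b) \<noteq> 0"
  shows "\<exists>r. \<forall>s t. onpl r (v0 + s *\<^sub>R a + t *\<^sub>R b)"
proof -
  define d where "d = px a * py b - py a * px b"
  have d: "d \<noteq> 0" using assms by (simp add: d_def)
  define g1 where "g1 = (pz a * py b - pz b * py a) / d"
  define g2 where "g2 = (px a * pz b - px b * pz a) / d"
  have ga: "g1 * px a + g2 * py a = pz a"
  proof -
    have "g1 * px a + g2 * py a = ((pz a * py b - pz b * py a) * px a + (px a * pz b - px b * pz a) * py a) / d"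
      by (simp add: g1_def g2_def add_divide_distrib)
    also have "\<dots> = pz a * d / d" by (simp add: d_def algebra_simps)
    finally show ?thesis using d by simp
  qed
  have gb: "g1 * px b + g2 * py b = pz b"
  proof -
    have "g1 * px b + g2 * py b = ((pz a * py b - pz b * py a) * px b + (px a * pz b - px b * pz a) * py b) / d"
      by (simp add: g1_def g2_def add_divide_distrib)
    also have "\<dots> = pz b * d / d" by (simp add: d_def algebra_simps)
    finally show ?thesis using d by simp
  qed
  define r where "r = (g1, g2, pz v0 - g1 * px v0 - g2 * py v0)"
  have "onpl r (v0 + s *\<^sub>R a + t *\<^sub>R b)" for s t
  proof -
    have "pz (v0 + s *\<^sub>R a + t *\<^sub>R b) = pz v0 + s * (g1 * px a + g2 * py a) + t * (g1 * px b + g2 * py b)"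
      using ga gb by simp
    then show ?thesis by (simp add: onpl_def aff_def r_def algebra_simps)
  qed
  then show ?thesis by blast
qed

lemma adm_det:
  assumes "admissible_4hedral e" "k < 4"
  shows "det2 (px (e k), py (e k)) (px (e ((k+1) mod 4)), py (e ((k+1) mod 4))) \<noteq> 0"
proof -
  obtain s where "in_angle_interior e (0,0,s)" using assms(1) admissible_4hedral_def by blast
  then have "det3 (e k) (e ((k+1) mod 4)) (0,0,s) \<noteq> 0"
    using assms(2) unfolding in_angle_interior_def by (metis less_irrefl mult_zero_left)
  then show ?thesis by (simp add: det3_def)
qed

lemma face_vertex:
  assumes "2 \<le> m" "2 \<le> n" "a < m" "b < n"
  shows "\<exists>i j k. interior_vertex m n i j \<and> k < 4 \<and> vertex_face H i j k = face_plane H a b"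
proof (cases "a = 0")
  case True
  show ?thesis
  proof (cases "b = 0")
    case True
    then show ?thesis using \<open>a = 0\<close> assms
      by (intro exI[of _ 1] exI[of _ 1] exI[of _ 0]) (simp add: interior_vertex_def vertex_face_def)
  next
    case False
    then show ?thesis using \<open>a = 0\<close> assms
      by (intro exI[of _ 1] exI[of _ b] exI[of _ 3]) (simp add: interior_vertex_def vertex_face_def)
  qed
next
  case False
  show ?thesis
  proof (cases "b = 0")
    case True
    then show ?thesis using \<open>a \<noteq> 0\<close> assms
      by (intro exI[of _ a] exI[of _ 1] exI[of _ 1]) (simp add: interior_vertex_def vertex_face_def)
  next
    case False
    then show ?thesis using \<open>a \<noteq> 0\<close> assms
      by (intro exI[of _ a] exI[of _ b] exI[of _ 2]) (simp add: interior_vertex_def vertex_face_def)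
  qed
qed

lemma dc_face:
  assumes "dual_convex m n H" "a < m" "b < n"
  shows "\<exists>r. fitface H a b r \<and> ndegface H a b"
proof -
  have mn: "2 \<le> m" "2 \<le> n" using assms(1) by (auto simp: dual_convex_def)
  obtain i j k where ij: "interior_vertex m n i j" "k < 4" "vertex_face H i j k = face_plane H a b"
    using face_vertex[OF mn assms(2,3)] by blast
  have "dual_convex_at H i j" using assms(1) ij(1) by (simp add: dual_convex_def)
  then obtain v0 e where adm: "admissible_4hedral e" and
    vf: "vertex_face H i j k = {v0 + s *\<^sub>R e k + t *\<^sub>R e ((k+1) mod 4) | s t. True}"
    using ij(2) unfolding dual_convex_at_def by blast
  obtain r where r: "\<And>s t. onpl r (v0 + s *\<^sub>R e k + t *\<^sub>R e ((k+1) mod 4))"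
    using param_fit[OF adm_det[OF adm ij(2)]] by blast
  have fp: "face_plane H a b = {v0 + s *\<^sub>R e k + t *\<^sub>R e ((k+1) mod 4) | s t. True}"
    using ij(3) vf by simp
  have on: "onpl r p" if "p \<in> face_plane H a b" for p
    using that r unfolding fp by blast
  have mem: "H a b \<in> face_plane H a b" "H (Suc a) b \<in> face_plane H a b"
    "H (Suc a) (Suc b) \<in> face_plane H a b" "H a (Suc b) \<in> face_plane H a b"
    unfolding face_plane_def by (auto intro: hull_inc)
  have fit: "fitface H a b r" using on mem by (simp add: fitface_def)
  have "convex_quad (H a b) (H (Suc a) b) (H (Suc a) (Suc b)) (H a (Suc b))"
    using assms(1,2,3) by (simp add: dual_convex_def is_net_def)
  then have "\<not> collinear {H a b, H (Suc a) b, H (Suc a) (Suc b)}" by (simp add: convex_quad_def)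
  then have "ndegface H a b" using fit ndeg_nc unfolding fitface_def ndegface_def by blast
  then show ?thesis using fit by blast
qed

lemma cq_distinct:
  assumes "convex_quad A B C D"
  shows "D \<noteq> A" "D \<noteq> C" "A \<noteq> B" "B \<noteq> C"
proof -
  have nc: "\<not> collinear {A,B,C}" using assms by (simp add: convex_quad_def)
  obtain s t where st: "0 < s" "s < 1" "0 < t" "t < 1" "(1 - s) *\<^sub>R A + s *\<^sub>R C = (1 - t) *\<^sub>R B + t *\<^sub>R D"
    using assms by (auto simp: convex_quad_def)
  show "A \<noteq> B" using nc by (auto simp: collinear_2)
  show "B \<noteq> C" using nc by (auto simp: collinear_2 insert_commute)
  have cx: "(1 - s) * px A + s * px C = (1 - t) * px B + t * px D"
    and cy: "(1 - s) * py A + s * py C = (1 - t) * py B + t * py D"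
    and cz: "(1 - s) * pz A + s * pz C = (1 - t) * pz B + t * pz D"
    using st(5) by (simp_all add: pt_eq)
  show "D \<noteq> A"
  proof
    assume "D = A"
    let ?k = "- (1 - s - t) / s"
    have "px C - px B = ?k * (px A - px B)"
      using cx st(1) \<open>D = A\<close> by (simp add: field_simps, (simp add: algebra_simps)?)
    moreover have "py C - py B = ?k * (py A - py B)"
      using cy st(1) \<open>D = A\<close> by (simp add: field_simps, (simp add: algebra_simps)?)
    moreover have "pz C - pz B = ?k * (pz A - pz B)"
      using cz st(1) \<open>D = A\<close> by (simp add: field_simps, (simp add: algebra_simps)?)
    ultimately have "C - B = ?k *\<^sub>R (A - B)" by (simp add: pt_eq)
    then have "collinear {0, A - B, C - B}" by (auto simp: collinear_lemma)
    then show False using nc by (simp add: collinear_3)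
  qed
  show "D \<noteq> C"
  proof
    assume "D = C"
    let ?k = "(1 - s) / (1 - t)"
    have "px B - px C = ?k * (px A - px C)"
      using cx st(4) \<open>D = C\<close> by (simp add: field_simps, (simp add: algebra_simps)?)
    moreover have "py B - py C = ?k * (py A - py C)"
      using cy st(4) \<open>D = C\<close> by (simp add: field_simps, (simp add: algebra_simps)?)
    moreover have "pz B - pz C = ?k * (pz A - pz C)"
      using cz st(4) \<open>D = C\<close> by (simp add: field_simps, (simp add: algebra_simps)?)
    ultimately have "B - C = ?k *\<^sub>R (A - C)" by (simp add: pt_eq)
    then have "collinear {0, A - C, B - C}" by (auto simp: collinear_lemma)
    then have "collinear {A,C,B}" by (subst collinear_3) auto
    then show False using nc by (simp add: insert_commute)
  qed
qed

definition sh :: "pt \<Rightarrow> pt \<Rightarrow> pt" where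
  "sh r p = p + (0, 0, aff r p)"

lemma sh_comp[simp]: "px (sh r p) = px p" "py (sh r p) = py p" "pz (sh r p) = pz p + aff r p"
  by (simp_all add: sh_def)

lemma iso_sh: "iso_cong 0 (px r) (py r) (0,0,pz r) p = sh r p"
  by (simp add: iso_cong_def pt_eq aff_def algebra_simps)

lemma sh_inv: "sh (-r) (sh r p) = p"
  by (simp add: pt_eq aff_def algebra_simps)

lemma collinear_sh: assumes "collinear S" shows "collinear (sh r ` S)"
proof -
  obtain u where u: "\<forall>x\<in>S. \<forall>y\<in>S. \<exists>c. x - y = c *\<^sub>R u" using assms unfolding collinear_def by blast
  define u' where "u' = u + (0, 0, px r * px u + py r * py u)"
  have "\<exists>c. sh r x - sh r y = c *\<^sub>R u'" if xy: "x \<in> S" "y \<in> S" for x y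
  proof -
    obtain c where c: "x - y = c *\<^sub>R u" using u xy by blast
    have hx: "px x - px y = c * px u" using arg_cong[OF c, of px] by simp
    have hy: "py x - py y = c * py u" using arg_cong[OF c, of py] by simp
    have hz: "pz x - pz y = c * pz u" using arg_cong[OF c, of pz] by simp
    have ex: "px (sh r x - sh r y) = px (c *\<^sub>R u')" using hx by (simp add: u'_def)
    have ey: "py (sh r x - sh r y) = py (c *\<^sub>R u')" using hy by (simp add: u'_def)
    have "pz (sh r x - sh r y) = (pz x - pz y) + px r * (px x - px y) + py r * (py x - py y)"
      by (simp add: aff_def algebra_simps)
    also have "\<dots> = c * pz u + px r * (c * px u) + py r * (c * py u)" by (simp only: hx hy hz)
    also have "\<dots> = pz (c *\<^sub>R u')" by (simp add: u'_def algebra_simps)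
    finally have ez: "pz (sh r x - sh r y) = pz (c *\<^sub>R u')" .
    have "sh r x - sh r y = c *\<^sub>R u'" using ex ey ez by (simp only: pt_eq)
    then show ?thesis by blast
  qed
  then have "\<forall>x\<in>sh r ` S. \<forall>y\<in>sh r ` S. \<exists>c. x - y = c *\<^sub>R u'" by auto
  then show ?thesis unfolding collinear_def by blast
qed

lemma cq_sh:
  assumes "convex_quad A B C D"
  shows "convex_quad (sh r A) (sh r B) (sh r C) (sh r D)"
proof -
  have nc: "\<not> collinear {A,B,C}" using assms by (simp add: convex_quad_def)
  have "\<not> collinear {sh r A, sh r B, sh r C}"
  proof
    assume "collinear {sh r A, sh r B, sh r C}"
    then have "collinear (sh (-r) ` {sh r A, sh r B, sh r C})" by (rule collinear_sh)
    then show False using nc by (simp add: sh_inv)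
  qed
  moreover obtain s t where st: "0 < s" "s < 1" "0 < t" "t < 1" "(1 - s) *\<^sub>R A + s *\<^sub>R C = (1 - t) *\<^sub>R B + t *\<^sub>R D"
    using assms by (auto simp: convex_quad_def)
  have lin: "(1 - s) *\<^sub>R sh r P + s *\<^sub>R sh r Q = sh r ((1 - s) *\<^sub>R P + s *\<^sub>R Q)" for s P Q
    by (simp add: pt_eq aff_def algebra_simps)
  have "(1 - s) *\<^sub>R sh r A + s *\<^sub>R sh r C = (1 - t) *\<^sub>R sh r B + t *\<^sub>R sh r D"
    unfolding lin st(5) ..
  ultimately show ?thesis using st(1-4) unfolding convex_quad_def by blast
qed

lemma det2_rot: "det2 (c * u1 - s * u2, s * u1 + c * u2) (c * v1 - s * v2, s * v1 + c * v2) = (c * c + s * s) * det2 (u1, u2) (v1, (v2::real))"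
  unfolding det2_def by (simp add: algebra_simps)

lemma cs1: "cos phi * cos phi + sin phi * sin (phi::real) = 1"
  using sin_cos_squared_add[of phi] by (simp add: power2_eq_square)

definition rotfit :: "real \<Rightarrow> real \<Rightarrow> real \<Rightarrow> pt \<Rightarrow> pt \<Rightarrow> pt" where
  "rotfit phi c1 c2 b r =
    (let g1 = cos phi * (px r + c1) - sin phi * (py r + c2);
         g2 = sin phi * (px r + c1) + cos phi * (py r + c2)
     in (g1, g2, pz r + pz b - g1 * px b - g2 * py b))"

definition rot :: "real \<Rightarrow> real \<times> real \<Rightarrow> real \<times> real" where
  "rot phi v = (cos phi * fst v - sin phi * snd v, sin phi * fst v + cos phi * snd v)"

lemma tp_rotfit: "tp (rotfit phi c1 c2 b r) = rot phi (px r + c1, py r + c2)"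
  by (simp add: tp_def rotfit_def rot_def Let_def)

lemma iso_fit:
  assumes "onpl r p"
  shows "onpl (rotfit phi c1 c2 b r) (iso_cong phi c1 c2 b p)"
proof -
  define c where "c = cos phi"
  define s where "s = sin phi"
  have cs: "c * c + s * s = 1" unfolding c_def s_def by (rule cs1)
  have z: "pz p = px r * px p + py r * py p + pz r" using assms by (simp add: onpl_def aff_def)
  define G1 where "G1 = px r + c1"
  define G2 where "G2 = py r + c2"
  have key: "(c * G1 - s * G2) * (c * px p - s * py p) + (s * G1 + c * G2) * (s * px p + c * py p)
      = (c * c + s * s) * (G1 * px p + G2 * py p)"
    by algebra
  have "pz (iso_cong phi c1 c2 b p) = G1 * px p + G2 * py p + pz r + pz b"
    using z by (simp add: iso_cong_def G1_def G2_def algebra_simps)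
  also have "\<dots> = (c * G1 - s * G2) * (c * px p - s * py p) + (s * G1 + c * G2) * (s * px p + c * py p) + pz r + pz b"
    using key cs by simp
  finally have pzi: "pz (iso_cong phi c1 c2 b p) = (c * G1 - s * G2) * (c * px p - s * py p) + (s * G1 + c * G2) * (s * px p + c * py p) + pz r + pz b" .
  have ix: "px (iso_cong phi c1 c2 b p) = c * px p - s * py p + px b" by (simp add: iso_cong_def c_def s_def)
  have iy: "py (iso_cong phi c1 c2 b p) = s * px p + c * py p + py b" by (simp add: iso_cong_def c_def s_def)
  have rx: "px (rotfit phi c1 c2 b r) = c * G1 - s * G2" by (simp add: rotfit_def Let_def c_def s_def G1_def G2_def)
  have ry: "py (rotfit phi c1 c2 b r) = s * G1 + c * G2" by (simp add: rotfit_def Let_def c_def s_def G1_def G2_def)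
  have rz: "pz (rotfit phi c1 c2 b r) = pz r + pz b - (c * G1 - s * G2) * px b - (s * G1 + c * G2) * py b"
    by (simp add: rotfit_def Let_def c_def s_def G1_def G2_def)
  show ?thesis unfolding onpl_def aff_def ix iy rx ry rz pzi by algebra
qed

lemma iso_ndeg:
  assumes "ndeg A B C"
  shows "ndeg (iso_cong phi c1 c2 b A) (iso_cong phi c1 c2 b B) (iso_cong phi c1 c2 b C)"
proof -
  let ?c = "cos phi" and ?s = "sin phi"
  have "det2 (px (iso_cong phi c1 c2 b B) - px (iso_cong phi c1 c2 b A), py (iso_cong phi c1 c2 b B) - py (iso_cong phi c1 c2 b A))
         (px (iso_cong phi c1 c2 b C) - px (iso_cong phi c1 c2 b A), py (iso_cong phi c1 c2 b C) - py (iso_cong phi c1 c2 b A))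
       = det2 (?c * (px B - px A) - ?s * (py B - py A), ?s * (px B - px A) + ?c * (py B - py A))
              (?c * (px C - px A) - ?s * (py C - py A), ?s * (px C - px A) + ?c * (py C - py A))"
    unfolding iso_cong_def by (simp add: algebra_simps del: det2_simp)
  also have "\<dots> = det2 (px B - px A, py B - py A) (px C - px A, py C - py A)"
    unfolding det2_rot cs1 by simp
  finally have eq: "det2 (px (iso_cong phi c1 c2 b B) - px (iso_cong phi c1 c2 b A), py (iso_cong phi c1 c2 b B) - py (iso_cong phi c1 c2 b A))
         (px (iso_cong phi c1 c2 b C) - px (iso_cong phi c1 c2 b A), py (iso_cong phi c1 c2 b C) - py (iso_cong phi c1 c2 b A))
       = det2 (px B - px A, py B - py A) (px C - px A, py C - py A)" .
  show ?thesis using assms unfolding ndeg_def eq .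
qed

lemma rot_eq:
  assumes "px (iso_cong p1 a1 a2 b1 P) = px (iso_cong p2 a1' a2' b2 P)"
    "py (iso_cong p1 a1 a2 b1 P) = py (iso_cong p2 a1' a2' b2 P)"
    "px (iso_cong p1 a1 a2 b1 Q) = px (iso_cong p2 a1' a2' b2 Q)"
    "py (iso_cong p1 a1 a2 b1 Q) = py (iso_cong p2 a1' a2' b2 Q)"
    "tp P \<noteq> tp Q"
  shows "cos p1 = cos p2 \<and> sin p1 = sin p2 \<and> px b1 = px b2 \<and> py b1 = py b2"
proof -
  define dc where "dc = cos p1 - cos p2"
  define ds where "ds = sin p1 - sin p2"
  define x where "x = px P - px Q"
  define y where "y = py P - py Q"
  have e1: "dc * x - ds * y = 0" using assms(1,3) unfolding dc_def ds_def x_def y_def iso_cong_def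
    by (simp add: algebra_simps)
  have e2: "ds * x + dc * y = 0" using assms(2,4) unfolding dc_def ds_def x_def y_def iso_cong_def
    by (simp add: algebra_simps)
  have nz: "x^2 + y^2 \<noteq> 0" using assms(5) unfolding x_def y_def tp_def
    by (simp add: sum_power2_eq_zero_iff)
  have "dc * (x^2 + y^2) = x * (dc * x - ds * y) + y * (ds * x + dc * y)" by algebra
  then have "dc * (x^2 + y^2) = 0" using e1 e2 by simp
  then have "dc = 0" using nz by (metis mult_eq_0_iff)
  have "ds * (x^2 + y^2) = x * (ds * x + dc * y) - y * (dc * x - ds * y)" by algebra
  then have "ds * (x^2 + y^2) = 0" using e1 e2 by simp
  then have "ds = 0" using nz by (metis mult_eq_0_iff)
  have c: "cos p1 = cos p2" "sin p1 = sin p2" using \<open>dc = 0\<close> \<open>ds = 0\<close> by (simp_all add: dc_def ds_def)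
  then show ?thesis using assms(1,2) by (simp add: iso_cong_def)
qed

lemma Qd_rot: "Qd (rot phi p0) (rot phi p1) (rot phi p2) (rot phi p3) = Qd p0 p1 p2 p3"
proof -
  have cs: "(cos phi)^2 + (sin phi)^2 = 1" by simp
  have "det2 (rot phi u) (rot phi v) = det2 u v" for u v
    using det2_rot[of "cos phi" "fst u" "sin phi" "snd u" "fst v" "snd v"]
    by (cases u; cases v) (simp add: rot_def cs1 del: det2_simp)
  then show ?thesis by (simp add: Qd_def)
qed

lemma Qd_trans: "Qd p0 p1 p2 p3 = det2 (p1 - p0) (p2 - p0) + det2 (p2 - p0) (p3 - p0)"
  by (cases p0; cases p1; cases p2; cases p3) (simp add: Qd_def algebra_simps)

lemma ndeg_tp: "ndeg A B C \<Longrightarrow> tp A \<noteq> tp B \<and> tp B \<noteq> tp C \<and> tp A \<noteq> tp C"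
  by (auto simp: ndeg_def tp_def)

lemma tp_add: "tp (r + q) = (px r + px q, py r + py q)"
  by (simp add: tp_def)

locale flexF =
  fixes m n :: nat and F :: "nat \<Rightarrow> nat \<Rightarrow> pt" and Ft :: "real \<Rightarrow> nat \<Rightarrow> nat \<Rightarrow> pt"
  assumes dc: "dual_convex m n F"
  and cont: "\<forall>i\<le>m. \<forall>j\<le>n. continuous_on {0..1} (\<lambda>t. Ft t i j)"
  and init: "\<forall>i\<le>m. \<forall>j\<le>n. Ft 0 i j = F i j"
  and nets: "\<forall>t\<in>{0..1}. is_net m n (Ft t)"
  and faces: "\<forall>t\<in>{0..1}. \<forall>i<m. \<forall>j<n. \<exists>phi c1 c2 b.
            \<forall>(k, l) \<in> {(i, j), (Suc i, j), (Suc i, Suc j), (i, Suc j)}.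
               Ft t k l = iso_cong phi c1 c2 b (F k l)"
  and curv: "\<forall>t\<in>{0..1}. \<forall>i j. interior_vertex m n i j \<longrightarrow>
            curvature (Ft t) i j = curvature F i j"
begin

definition h :: "real \<Rightarrow> nat \<Rightarrow> nat \<Rightarrow> real" where
  "h t i j = pz (Ft t i j) - pz (F i j)"

definition hfit :: "real \<Rightarrow> nat \<Rightarrow> nat \<Rightarrow> pt \<Rightarrow> bool" where
  "hfit t a b q \<longleftrightarrow> h t a b = aff q (F a b) \<and> h t (Suc a) b = aff q (F (Suc a) b)
     \<and> h t (Suc a) (Suc b) = aff q (F (Suc a) (Suc b)) \<and> h t a (Suc b) = aff q (F a (Suc b))"

lemma face_cong:
  assumes "t \<in> {0..1}" "a < m" "b < n"
  shows "\<exists>phi c1 c2 bb. Ft t a b = iso_cong phi c1 c2 bb (F a b) \<and>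
     Ft t (Suc a) b = iso_cong phi c1 c2 bb (F (Suc a) b) \<and>
     Ft t (Suc a) (Suc b) = iso_cong phi c1 c2 bb (F (Suc a) (Suc b)) \<and>
     Ft t a (Suc b) = iso_cong phi c1 c2 bb (F a (Suc b))"
  using faces assms by fastforce

lemma h_iso: "Ft t a b = iso_cong phi c1 c2 bb (F a b) \<Longrightarrow> h t a b = aff (c1, c2, pz bb) (F a b)"
  by (simp add: h_def iso_cong_def aff_def)

lemma hfit_iso:
  assumes "Ft t a b = iso_cong phi c1 c2 bb (F a b)"
     "Ft t (Suc a) b = iso_cong phi c1 c2 bb (F (Suc a) b)"
     "Ft t (Suc a) (Suc b) = iso_cong phi c1 c2 bb (F (Suc a) (Suc b))"
     "Ft t a (Suc b) = iso_cong phi c1 c2 bb (F a (Suc b))"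
  shows "hfit t a b (c1, c2, pz bb)"
  using assms by (simp add: hfit_def h_iso)

lemma hfit_ex: "t \<in> {0..1} \<Longrightarrow> a < m \<Longrightarrow> b < n \<Longrightarrow> \<exists>q. hfit t a b q"
  using face_cong hfit_iso by metis

lemma F_face: "a < m \<Longrightarrow> b < n \<Longrightarrow> \<exists>r. fitface F a b r \<and> ndegface F a b"
  using dc_face[OF dc] by blast

lemma hfit_uniq:
  assumes "hfit t a b q" "hfit t a b q'" "ndegface F a b"
  shows "q = q'"
  using assms uniq_aff unfolding hfit_def ndegface_def by metis

lemma Ft_fit:
  assumes "fitface F a b r"
     "Ft t a b = iso_cong phi c1 c2 bb (F a b)"
     "Ft t (Suc a) b = iso_cong phi c1 c2 bb (F (Suc a) b)"
     "Ft t (Suc a) (Suc b) = iso_cong phi c1 c2 bb (F (Suc a) (Suc b))"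
     "Ft t a (Suc b) = iso_cong phi c1 c2 bb (F a (Suc b))"
  shows "fitface (Ft t) a b (rotfit phi c1 c2 bb r)"
  using assms iso_fit unfolding fitface_def by metis

lemma Ft_ndeg:
  assumes "ndegface F a b"
     "Ft t a b = iso_cong phi c1 c2 bb (F a b)"
     "Ft t (Suc a) b = iso_cong phi c1 c2 bb (F (Suc a) b)"
     "Ft t (Suc a) (Suc b) = iso_cong phi c1 c2 bb (F (Suc a) (Suc b))"
  shows "ndegface (Ft t) a b"
  using assms iso_ndeg unfolding ndegface_def by metis

lemma rot_cong: "cos p1 = cos p2 \<Longrightarrow> sin p1 = sin p2 \<Longrightarrow> rot p1 = rot p2"
  by (simp add: rot_def fun_eq_iff)

lemma share:
  assumes "Ft t (fst P) (snd P) = iso_cong p1 a1 a2 b1 (F (fst P) (snd P))"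
    "Ft t (fst P) (snd P) = iso_cong p2 a1' a2' b2 (F (fst P) (snd P))"
    "Ft t (fst Q) (snd Q) = iso_cong p1 a1 a2 b1 (F (fst Q) (snd Q))"
    "Ft t (fst Q) (snd Q) = iso_cong p2 a1' a2' b2 (F (fst Q) (snd Q))"
    "tp (F (fst P) (snd P)) \<noteq> tp (F (fst Q) (snd Q))"
  shows "cos p1 = cos p2 \<and> sin p1 = sin p2 \<and> px b1 = px b2 \<and> py b1 = py b2"
proof -
  have eP: "iso_cong p1 a1 a2 b1 (F (fst P) (snd P)) = iso_cong p2 a1' a2' b2 (F (fst P) (snd P))"
    using assms(1,2) by simp
  have eQ: "iso_cong p1 a1 a2 b1 (F (fst Q) (snd Q)) = iso_cong p2 a1' a2' b2 (F (fst Q) (snd Q))"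
    using assms(3,4) by simp
  show ?thesis
    by (rule rot_eq[OF arg_cong[OF eP, of px] arg_cong[OF eP, of py] arg_cong[OF eQ, of px] arg_cong[OF eQ, of py] assms(5)])
qed

lemma curvF:
  assumes t: "t \<in> {0..1}" and iv: "interior_vertex m n (Suc i) (Suc j)"
    and r0: "fitface F i j r0" and r1: "fitface F (Suc i) j r1"
    and r2: "fitface F (Suc i) (Suc j) r2" and r3: "fitface F i (Suc j) r3"
    and q0: "hfit t i j q0" and q1: "hfit t (Suc i) j q1"
    and q2: "hfit t (Suc i) (Suc j) q2" and q3: "hfit t i (Suc j) q3"
  shows "Qd (tp (r0 + q0)) (tp (r1 + q1)) (tp (r2 + q2)) (tp (r3 + q3)) = Qd (tp r0) (tp r1) (tp r2) (tp r3)"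
proof -
  have lt: "i < m" "Suc i < m" "j < n" "Suc j < n" using iv by (auto simp: interior_vertex_def)
  have n0: "ndegface F i j" using F_face lt by blast
  have n1: "ndegface F (Suc i) j" using F_face lt by blast
  have n2: "ndegface F (Suc i) (Suc j)" using F_face lt by blast
  have n3: "ndegface F i (Suc j)" using F_face lt by blast
  obtain p0 a0 b0 c0 where c0: "Ft t i j = iso_cong p0 a0 b0 c0 (F i j)"
     "Ft t (Suc i) j = iso_cong p0 a0 b0 c0 (F (Suc i) j)"
     "Ft t (Suc i) (Suc j) = iso_cong p0 a0 b0 c0 (F (Suc i) (Suc j))"
     "Ft t i (Suc j) = iso_cong p0 a0 b0 c0 (F i (Suc j))"
    using face_cong[OF t lt(1) lt(3)] by blast
  obtain p1 a1 b1 c1 where c1: "Ft t (Suc i) j = iso_cong p1 a1 b1 c1 (F (Suc i) j)"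
     "Ft t (Suc (Suc i)) j = iso_cong p1 a1 b1 c1 (F (Suc (Suc i)) j)"
     "Ft t (Suc (Suc i)) (Suc j) = iso_cong p1 a1 b1 c1 (F (Suc (Suc i)) (Suc j))"
     "Ft t (Suc i) (Suc j) = iso_cong p1 a1 b1 c1 (F (Suc i) (Suc j))"
    using face_cong[OF t lt(2) lt(3)] by blast
  obtain p2 a2 b2 c2 where c2: "Ft t (Suc i) (Suc j) = iso_cong p2 a2 b2 c2 (F (Suc i) (Suc j))"
     "Ft t (Suc (Suc i)) (Suc j) = iso_cong p2 a2 b2 c2 (F (Suc (Suc i)) (Suc j))"
     "Ft t (Suc (Suc i)) (Suc (Suc j)) = iso_cong p2 a2 b2 c2 (F (Suc (Suc i)) (Suc (Suc j)))"
     "Ft t (Suc i) (Suc (Suc j)) = iso_cong p2 a2 b2 c2 (F (Suc i) (Suc (Suc j)))"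
    using face_cong[OF t lt(2) lt(4)] by blast
  obtain p3 a3 b3 c3 where c3: "Ft t i (Suc j) = iso_cong p3 a3 b3 c3 (F i (Suc j))"
     "Ft t (Suc i) (Suc j) = iso_cong p3 a3 b3 c3 (F (Suc i) (Suc j))"
     "Ft t (Suc i) (Suc (Suc j)) = iso_cong p3 a3 b3 c3 (F (Suc i) (Suc (Suc j)))"
     "Ft t i (Suc (Suc j)) = iso_cong p3 a3 b3 c3 (F i (Suc (Suc j)))"
    using face_cong[OF t lt(1) lt(4)] by blast
  have e01: "cos p0 = cos p1 \<and> sin p0 = sin p1"
    using share[of t "(Suc i, j)" p0 a0 b0 c0 p1 a1 b1 c1 "(Suc i, Suc j)"] c0 c1 n0 ndeg_tp
    unfolding ndegface_def by auto
  have e12: "cos p1 = cos p2 \<and> sin p1 = sin p2"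
    using share[of t "(Suc i, Suc j)" p1 a1 b1 c1 p2 a2 b2 c2 "(Suc (Suc i), Suc j)"] c1 c2 n2 ndeg_tp
    unfolding ndegface_def by auto
  have e23: "cos p2 = cos p3 \<and> sin p2 = sin p3"
    using share[of t "(Suc i, Suc j)" p2 a2 b2 c2 p3 a3 b3 c3 "(Suc i, Suc (Suc j))"] c2 c3 n3 ndeg_tp
    unfolding ndegface_def by auto
  have rr: "rot p1 = rot p0" "rot p2 = rot p0" "rot p3 = rot p0"
    using e01 e12 e23 rot_cong by metis+
  have q0e: "q0 = (a0, b0, pz c0)" using hfit_uniq[OF q0 _ n0] hfit_iso[OF c0] by blast
  have q1e: "q1 = (a1, b1, pz c1)" using hfit_uniq[OF q1 _ n1] hfit_iso[OF c1(1,2,3,4)] by blast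
  have q2e: "q2 = (a2, b2, pz c2)" using hfit_uniq[OF q2 _ n2] hfit_iso[OF c2] by blast
  have q3e: "q3 = (a3, b3, pz c3)" using hfit_uniq[OF q3 _ n3] hfit_iso[OF c3(1,2,3,4)] by blast
  have ivF: "curvature F (Suc i) (Suc j) = 1/2 * Qd (tp r0) (tp r1) (tp r2) (tp r3)"
    using curv_fit[OF iv] r0 r1 r2 r3 n0 n1 n2 n3 by simp
  have ivT: "curvature (Ft t) (Suc i) (Suc j) = 1/2 * Qd (tp (rotfit p0 a0 b0 c0 r0)) (tp (rotfit p1 a1 b1 c1 r1))
     (tp (rotfit p2 a2 b2 c2 r2)) (tp (rotfit p3 a3 b3 c3 r3))"
    using curv_fit[OF iv, of "Ft t"]
      Ft_fit[OF r0 c0] Ft_fit[OF r1 c1(1,2,3,4)] Ft_fit[OF r2 c2] Ft_fit[OF r3 c3(1,2,3,4)]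
      Ft_ndeg[OF n0 c0(1,2,3)] Ft_ndeg[OF n1 c1(1,2,3)] Ft_ndeg[OF n2 c2(1,2,3)] Ft_ndeg[OF n3 c3(1,2,3)]
    by simp
  have "curvature (Ft t) (Suc i) (Suc j) = curvature F (Suc i) (Suc j)" using curv t iv by blast
  then have "Qd (tp (rotfit p0 a0 b0 c0 r0)) (tp (rotfit p1 a1 b1 c1 r1))
     (tp (rotfit p2 a2 b2 c2 r2)) (tp (rotfit p3 a3 b3 c3 r3)) = Qd (tp r0) (tp r1) (tp r2) (tp r3)"
    using ivF ivT by simp
  then show ?thesis
    unfolding tp_rotfit rr Qd_rot q0e q1e q2e q3e tp_add by simp
qed

end

lemma grid_const:
  fixes K :: "nat \<Rightarrow> nat \<Rightarrow> 'a"
  assumes h1: "\<And>a b. Suc a < m \<Longrightarrow> b < n \<Longrightarrow> K a b = K (Suc a) b"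
    and h2: "\<And>a b. a < m \<Longrightarrow> Suc b < n \<Longrightarrow> K a b = K a (Suc b)"
    and am: "a < m" and bn: "b < n"
  shows "K a b = K 0 0"
proof -
  have A: "a' < m \<longrightarrow> K a' 0 = K 0 0" for a'
  proof (induction a')
    case (Suc a')
    show ?case
    proof
      assume "Suc a' < m"
      then have "K a' 0 = K (Suc a') 0" using h1[of a' 0] bn by simp
      then show "K (Suc a') 0 = K 0 0" using Suc \<open>Suc a' < m\<close> by simp
    qed
  qed simp
  have B: "b' < n \<longrightarrow> K a b' = K a 0" for b'
  proof (induction b')
    case (Suc b')
    show ?case
    proof
      assume "Suc b' < n"
      then have "K a b' = K a (Suc b')" using h2[of a b'] am by simp
      then show "K a (Suc b') = K a 0" using Suc \<open>Suc b' < n\<close> by simp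
    qed
  qed simp
  have "K a b = K a 0" using B bn by blast
  also have "\<dots> = K 0 0" using A am by blast
  finally show ?thesis .
qed

lemma corner_ex:
  assumes "1 \<le> m" "1 \<le> n" "i \<le> m" "j \<le> n"
  shows "\<exists>a b. a < m \<and> b < n \<and> (i = a \<or> i = Suc a) \<and> (j = b \<or> j = Suc b)"
proof -
  have "\<exists>a. a < m \<and> (i = a \<or> i = Suc a)"
  proof (cases "i < m")
    case True then show ?thesis by blast
  next
    case False then have "i = Suc (m - 1)" "m - 1 < m" using assms(1,3) by auto
    then show ?thesis by blast
  qed
  moreover have "\<exists>b. b < n \<and> (j = b \<or> j = Suc b)"
  proof (cases "j < n")
    case True then show ?thesis by blast
  next
    case False then have "j = Suc (n - 1)" "n - 1 < n" using assms(2,4) by auto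
    then show ?thesis by blast
  qed
  ultimately show ?thesis by blast
qed

definition icd :: "real \<times> real \<times> real \<times> pt \<Rightarrow> pt \<Rightarrow> pt" where
  "icd d p = iso_cong (fst d) (fst (snd d)) (fst (snd (snd d))) (snd (snd (snd d))) p"

context flexF begin

definition Pc :: "real \<Rightarrow> nat \<Rightarrow> nat \<Rightarrow> real \<times> real \<times> real \<times> pt \<Rightarrow> bool" where
  "Pc t a b d \<longleftrightarrow> Ft t a b = icd d (F a b) \<and> Ft t (Suc a) b = icd d (F (Suc a) b) \<and>
     Ft t (Suc a) (Suc b) = icd d (F (Suc a) (Suc b)) \<and> Ft t a (Suc b) = icd d (F a (Suc b))"

lemma Pc_ex: "t \<in> {0..1} \<Longrightarrow> a < m \<Longrightarrow> b < n \<Longrightarrow> \<exists>d. Pc t a b d"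
proof -
  assume "t \<in> {0..1}" "a < m" "b < n"
  then obtain phi c1 c2 bb where "Ft t a b = iso_cong phi c1 c2 bb (F a b) \<and>
     Ft t (Suc a) b = iso_cong phi c1 c2 bb (F (Suc a) b) \<and>
     Ft t (Suc a) (Suc b) = iso_cong phi c1 c2 bb (F (Suc a) (Suc b)) \<and>
     Ft t a (Suc b) = iso_cong phi c1 c2 bb (F a (Suc b))" using face_cong by blast
  then have "Pc t a b (phi, c1, c2, bb)" by (simp add: Pc_def icd_def)
  then show ?thesis by blast
qed

lemma nontriv:
  assumes t: "t \<in> {0..1}" and g: "\<forall>i\<le>m. \<forall>j\<le>n. h t i j = aff \<gamma> (F i j)"
  shows "\<exists>phi c1 c2 b. \<forall>i\<le>m. \<forall>j\<le>n. Ft t i j = iso_cong phi c1 c2 b (F i j)"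
proof -
  have mn: "2 \<le> m" "2 \<le> n" using dc by (auto simp: dual_convex_def)
  define D where "D a b = (SOME d. Pc t a b d)" for a b
  have PD: "Pc t a b (D a b)" if "a < m" "b < n" for a b
    unfolding D_def using Pc_ex[OF t that] by (rule someI_ex)
  define K where "K a b = (cos (fst (D a b)), sin (fst (D a b)), px (snd (snd (snd (D a b)))), py (snd (snd (snd (D a b)))))" for a b
  have nd: "ndegface F a b" if "a < m" "b < n" for a b using F_face that by blast
  have gam: "(fst (snd (D a b)), fst (snd (snd (D a b))), pz (snd (snd (snd (D a b))))) = \<gamma>"
    if "a < m" "b < n" for a b
  proof (rule hfit_uniq[OF _ _ nd[OF that]])
    show "hfit t a b (fst (snd (D a b)), fst (snd (snd (D a b))), pz (snd (snd (snd (D a b)))))"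
      using PD[OF that] unfolding Pc_def icd_def by (intro hfit_iso) auto
    show "hfit t a b \<gamma>" using g that by (simp add: hfit_def)
  qed
  have K1: "K a b = K (Suc a) b" if "Suc a < m" "b < n" for a b
  proof -
    have p1: "Pc t a b (D a b)" "Pc t (Suc a) b (D (Suc a) b)" using PD that by auto
    have tpne: "tp (F (Suc a) b) \<noteq> tp (F (Suc a) (Suc b))"
      using nd[of a b] that ndeg_tp unfolding ndegface_def by auto
    have f: "Ft t (Suc a) b = iso_cong (fst (D a b)) (fst (snd (D a b))) (fst (snd (snd (D a b)))) (snd (snd (snd (D a b)))) (F (Suc a) b)" "Ft t (Suc a) b = iso_cong (fst (D (Suc a) b)) (fst (snd (D (Suc a) b))) (fst (snd (snd (D (Suc a) b)))) (snd (snd (snd (D (Suc a) b)))) (F (Suc a) b)" "Ft t (Suc a) (Suc b) = iso_cong (fst (D a b)) (fst (snd (D a b))) (fst (snd (snd (D a b)))) (snd (snd (snd (D a b)))) (F (Suc a) (Suc b))" "Ft t (Suc a) (Suc b) = iso_cong (fst (D (Suc a) b)) (fst (snd (D (Suc a) b))) (fst (snd (snd (D (Suc a) b)))) (snd (snd (snd (D (Suc a) b)))) (F (Suc a) (Suc b))"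
      using p1 unfolding Pc_def icd_def by blast+
    then have "cos (fst (D a b)) = cos (fst (D (Suc a) b)) \<and> sin (fst (D a b)) = sin (fst (D (Suc a) b)) \<and>
       px (snd (snd (snd (D a b)))) = px (snd (snd (snd (D (Suc a) b)))) \<and> py (snd (snd (snd (D a b)))) = py (snd (snd (snd (D (Suc a) b))))"
      using share[of t "(Suc a, b)" "fst (D a b)" "fst (snd (D a b))" "fst (snd (snd (D a b)))" "snd (snd (snd (D a b)))" "fst (D (Suc a) b)" "fst (snd (D (Suc a) b))" "fst (snd (snd (D (Suc a) b)))" "snd (snd (snd (D (Suc a) b)))" "(Suc a, Suc b)", unfolded fst_conv snd_conv] tpne by blast
    then show ?thesis unfolding K_def by simp
  qed
  have K2: "K a b = K a (Suc b)" if "a < m" "Suc b < n" for a b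
  proof -
    have p1: "Pc t a b (D a b)" "Pc t a (Suc b) (D a (Suc b))" using PD that by auto
    have tpne: "tp (F a (Suc b)) \<noteq> tp (F (Suc a) (Suc b))"
      using nd[of a "Suc b"] that ndeg_tp unfolding ndegface_def by auto
    have f: "Ft t a (Suc b) = iso_cong (fst (D a b)) (fst (snd (D a b))) (fst (snd (snd (D a b)))) (snd (snd (snd (D a b)))) (F a (Suc b))" "Ft t a (Suc b) = iso_cong (fst (D a (Suc b))) (fst (snd (D a (Suc b)))) (fst (snd (snd (D a (Suc b))))) (snd (snd (snd (D a (Suc b))))) (F a (Suc b))" "Ft t (Suc a) (Suc b) = iso_cong (fst (D a b)) (fst (snd (D a b))) (fst (snd (snd (D a b)))) (snd (snd (snd (D a b)))) (F (Suc a) (Suc b))" "Ft t (Suc a) (Suc b) = iso_cong (fst (D a (Suc b))) (fst (snd (D a (Suc b)))) (fst (snd (snd (D a (Suc b))))) (snd (snd (snd (D a (Suc b))))) (F (Suc a) (Suc b))"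
      using p1 unfolding Pc_def icd_def by blast+
    then have "cos (fst (D a b)) = cos (fst (D a (Suc b))) \<and> sin (fst (D a b)) = sin (fst (D a (Suc b))) \<and>
       px (snd (snd (snd (D a b)))) = px (snd (snd (snd (D a (Suc b))))) \<and> py (snd (snd (snd (D a b)))) = py (snd (snd (snd (D a (Suc b)))))"
      using share[of t "(a, Suc b)" "fst (D a b)" "fst (snd (D a b))" "fst (snd (snd (D a b)))" "snd (snd (snd (D a b)))" "fst (D a (Suc b))" "fst (snd (D a (Suc b)))" "fst (snd (snd (D a (Suc b))))" "snd (snd (snd (D a (Suc b))))" "(Suc a, Suc b)", unfolded fst_conv snd_conv] tpne by blast
    then show ?thesis unfolding K_def by simp
  qed
  have KK: "K a b = K 0 0" if "a < m" "b < n" for a b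
    using grid_const[of m n K, OF K1 K2 that] by blast
  have m0: "0 < m" "0 < n" using mn by auto
  show ?thesis
  proof (intro exI allI impI)
    fix i j assume ij: "i \<le> m" "j \<le> n"
    obtain a b where ab: "a < m" "b < n" "i = a \<or> i = Suc a" "j = b \<or> j = Suc b"
      using corner_ex[of m n i j] mn ij by auto
    have e: "Ft t i j = icd (D a b) (F i j)" using PD[OF ab(1,2)] ab(3,4) unfolding Pc_def by auto
    have k: "K a b = K 0 0" using KK ab by blast
    have ga: "(fst (snd (D a b)), fst (snd (snd (D a b))), pz (snd (snd (snd (D a b))))) =
       (fst (snd (D 0 0)), fst (snd (snd (D 0 0))), pz (snd (snd (snd (D 0 0)))))"
      using gam[OF ab(1,2)] gam[OF m0] by simp
    show "Ft t i j = iso_cong (fst (D 0 0)) (fst (snd (D 0 0))) (fst (snd (snd (D 0 0)))) (snd (snd (snd (D 0 0)))) (F i j)"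
      using e k ga unfolding icd_def K_def by (simp add: iso_cong_def)
  qed
qed

end

definition lin :: "pt \<Rightarrow> pt \<Rightarrow> real" where
  "lin q v = px q * px v + py q * py v"

lemma aff_diff: "aff q P' - aff q P = lin q (P' - P)"
  by (simp add: aff_def lin_def algebra_simps)

lemma lin_scale: "lin q (c *\<^sub>R v) = c * lin q v"
  by (simp add: lin_def algebra_simps)

definition lam :: "pt \<Rightarrow> pt \<Rightarrow> real" where
  "lam u w = inner u w / inner u u"

lemma lam_par:
  assumes "parallel_vec u w" "u \<noteq> 0"
  shows "w = lam u w *\<^sub>R u"
proof -
  have uu: "inner u u \<noteq> 0" using assms(2) by simp
  obtain c where "w = c *\<^sub>R u"
  proof -
    from assms(1) consider (a) c where "w = c *\<^sub>R u" | (b) c where "u = c *\<^sub>R w"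
      unfolding parallel_vec_def by blast
    then show thesis
    proof cases
      case (a c) then show thesis using that by blast
    next
      case (b c)
      then have "c \<noteq> 0" using assms(2) by auto
      then have "w = (1/c) *\<^sub>R u" using b by simp
      then show thesis using that by blast
    qed
  qed
  then show ?thesis unfolding lam_def using uu by (simp add: inner_scaleR_right)
qed

lemma onpl_sh: "onpl r p \<Longrightarrow> onpl (r + r') (sh r' p)"
  by (simp add: onpl_def aff_def algebra_simps)

lemma fit_sh:
  assumes "fitface H a b r"
    "H' a b = sh r' (H a b)" "H' (Suc a) b = sh r' (H (Suc a) b)"
    "H' (Suc a) (Suc b) = sh r' (H (Suc a) (Suc b))" "H' a (Suc b) = sh r' (H a (Suc b))"
  shows "fitface H' a b (r + r')"
  using assms onpl_sh unfolding fitface_def by metis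

lemma ndeg_sh:
  assumes "ndegface H a b"
    "H' a b = sh r' (H a b)" "H' (Suc a) b = sh r' (H (Suc a) b)"
    "H' (Suc a) (Suc b) = sh r' (H (Suc a) (Suc b))"
  shows "ndegface H' a b"
  using assms unfolding ndegface_def ndeg_def by simp

lemma par_grad:
  assumes "onpl rF FA" "onpl rF FB" "onpl rF FC" "onpl rG GA" "onpl rG GB" "onpl rG GC"
    "GB - GA = l1 *\<^sub>R (FB - FA)" "GC - GB = l2 *\<^sub>R (FC - FB)" "ndeg GA GB GC"
  shows "tp rG = tp rF"
proof -
  have e: "lin (rG - rF) (GB - GA) = 0" "lin (rG - rF) (GC - GB) = 0"
  proof -
    have "pz GB - pz GA = lin rG (GB - GA)" using assms(4,5) aff_diff by (simp add: onpl_def)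
    moreover have "pz FB - pz FA = lin rF (FB - FA)" using assms(1,2) aff_diff by (simp add: onpl_def)
    moreover have "pz GB - pz GA = l1 * (pz FB - pz FA)" using arg_cong[OF assms(7), of pz] by simp
    moreover have "lin rF (GB - GA) = l1 * lin rF (FB - FA)" unfolding assms(7) lin_scale ..
    ultimately show "lin (rG - rF) (GB - GA) = 0" by (simp add: lin_def algebra_simps)
    have "pz GC - pz GB = lin rG (GC - GB)" using assms(5,6) aff_diff by (simp add: onpl_def)
    moreover have "pz FC - pz FB = lin rF (FC - FB)" using assms(2,3) aff_diff by (simp add: onpl_def)
    moreover have "pz GC - pz GB = l2 * (pz FC - pz FB)" using arg_cong[OF assms(8), of pz] by simp
    moreover have "lin rF (GC - GB) = l2 * lin rF (FC - FB)" unfolding assms(8) lin_scale ..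
    ultimately show "lin (rG - rF) (GC - GB) = 0" by (simp add: lin_def algebra_simps)
  qed
  have d: "det2 (px GB - px GA, py GB - py GA) (px GC - px GB, py GC - py GB) \<noteq> 0"
    using assms(9) unfolding ndeg_def by (simp add: algebra_simps)
  have "px rG - px rF = 0 \<and> py rG - py rF = 0"
    by (rule cross0[OF d]) (use e in \<open>simp_all add: lin_def algebra_simps\<close>)
  then show ?thesis by (simp add: tp_def)
qed

context flexF begin

lemma local_to_global:
  assumes t: "t \<in> {0..1}" and loc: "\<forall>a<m. \<forall>b<n. \<exists>q. hfit t a b q \<and> px q = g1 \<and> py q = g2"
  shows "\<exists>\<gamma>. \<forall>i\<le>m. \<forall>j\<le>n. h t i j = aff \<gamma> (F i j)"
proof -
  have mn: "2 \<le> m" "2 \<le> n" using dc by (auto simp: dual_convex_def)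
  define Q where "Q a b = (SOME q. hfit t a b q \<and> px q = g1 \<and> py q = g2)" for a b
  have QQ: "hfit t a b (Q a b) \<and> px (Q a b) = g1 \<and> py (Q a b) = g2" if ab: "a < m" "b < n" for a b
  proof -
    have "\<exists>q. hfit t a b q \<and> px q = g1 \<and> py q = g2" using loc ab by blast
    then show ?thesis unfolding Q_def by (rule someI_ex)
  qed
  have Qe: "Q a b = (g1, g2, pz (Q a b))" if "a < m" "b < n" for a b
    using QQ[OF that] by (simp add: pt_eq)
  define K where "K a b = pz (Q a b)" for a b
  have K1: "K a b = K (Suc a) b" if "Suc a < m" "b < n" for a b
  proof -
    have "h t (Suc a) b = aff (Q a b) (F (Suc a) b)" using QQ[of a b] that by (simp add: hfit_def)
    moreover have "h t (Suc a) b = aff (Q (Suc a) b) (F (Suc a) b)" using QQ[of "Suc a" b] that by (simp add: hfit_def)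
    ultimately show ?thesis using QQ[of a b] QQ[of "Suc a" b] that by (simp add: K_def aff_def)
  qed
  have K2: "K a b = K a (Suc b)" if "a < m" "Suc b < n" for a b
  proof -
    have "h t a (Suc b) = aff (Q a b) (F a (Suc b))" using QQ[of a b] that by (simp add: hfit_def)
    moreover have "h t a (Suc b) = aff (Q a (Suc b)) (F a (Suc b))" using QQ[of a "Suc b"] that by (simp add: hfit_def)
    ultimately show ?thesis using QQ[of a b] QQ[of a "Suc b"] that by (simp add: K_def aff_def)
  qed
  have m0: "0 < m" "0 < n" using mn by auto
  have "h t i j = aff (g1, g2, K 0 0) (F i j)" if ij: "i \<le> m" "j \<le> n" for i j
  proof -
    obtain a b where ab: "a < m" "b < n" "i = a \<or> i = Suc a" "j = b \<or> j = Suc b"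
      using corner_ex[of m n i j] mn ij by auto
    have "h t i j = aff (Q a b) (F i j)" using QQ[OF ab(1,2)] ab(3,4) unfolding hfit_def by auto
    also have "Q a b = (g1, g2, K 0 0)"
      using Qe[OF ab(1,2)] grid_const[of m n K, OF K1 K2 ab(1,2)] by (simp add: K_def)
    finally show ?thesis .
  qed
  then show ?thesis by blast
qed

lemma h_cont: "i \<le> m \<Longrightarrow> j \<le> n \<Longrightarrow> continuous_on {0..1} (\<lambda>t. h t i j)"
  unfolding h_def pz_def using cont
  by (intro continuous_intros) auto

lemma h_zero: "i \<le> m \<Longrightarrow> j \<le> n \<Longrightarrow> h 0 i j = 0"
  using init by (simp add: h_def)

lemma Fnet: "is_net m n F" using dc by (simp add: dual_convex_def)

lemma Fcq: "i < m \<Longrightarrow> j < n \<Longrightarrow> convex_quad (F i j) (F (Suc i) j) (F (Suc i) (Suc j)) (F i (Suc j))"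
  using Fnet unfolding is_net_def by blast

lemma edgeH_nz: "a < m \<Longrightarrow> b \<le> n \<Longrightarrow> F (Suc a) b - F a b \<noteq> 0"
proof -
  assume ab: "a < m" "b \<le> n"
  have n1: "1 \<le> n" using dc by (simp add: dual_convex_def)
  show ?thesis
  proof (cases "b < n")
    case True
    then have "F a b \<noteq> F (Suc a) b" using cq_distinct(3)[OF Fcq[OF ab(1) True]] by blast
    then show ?thesis by simp
  next
    case False
    then have bn: "b = Suc (n - 1)" "n - 1 < n" using ab n1 by auto
    have "F a (Suc (n - 1)) \<noteq> F (Suc a) (Suc (n - 1))" using cq_distinct(2)[OF Fcq[OF ab(1) bn(2)]] by blast
    then show ?thesis using bn(1) by simp
  qed
qed

lemma edgeV_nz: "a \<le> m \<Longrightarrow> b < n \<Longrightarrow> F a (Suc b) - F a b \<noteq> 0"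
proof -
  assume ab: "a \<le> m" "b < n"
  have m1: "1 \<le> m" using dc by (simp add: dual_convex_def)
  show ?thesis
  proof (cases "a < m")
    case True
    then have "F a (Suc b) \<noteq> F a b" using cq_distinct(1)[OF Fcq[OF True ab(2)]] by blast
    then show ?thesis by simp
  next
    case False
    then have am: "a = Suc (m - 1)" "m - 1 < m" using ab m1 by auto
    have "F (Suc (m - 1)) b \<noteq> F (Suc (m - 1)) (Suc b)" using cq_distinct(4)[OF Fcq[OF am(2) ab(2)]] by blast
    then show ?thesis using am(1) by simp
  qed
qed

end

lemma lin_add: "lin q u + lin q v = lin q (u + v)"
  by (simp add: lin_def algebra_simps)

locale combG = flexF +
  fixes G :: "nat \<Rightarrow> nat \<Rightarrow> pt"
  assumes dcG: "dual_convex m n G" and comb: "combescure m n F G"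
begin

definition lamH where "lamH a b = lam (F (Suc a) b - F a b) (G (Suc a) b - G a b)"
definition lamV where "lamV a b = lam (F a (Suc b) - F a b) (G a (Suc b) - G a b)"

lemma GH: "a < m \<Longrightarrow> b \<le> n \<Longrightarrow> G (Suc a) b - G a b = lamH a b *\<^sub>R (F (Suc a) b - F a b)"
  unfolding lamH_def by (rule lam_par) (use comb edgeH_nz in \<open>auto simp: combescure_def\<close>)

lemma GV: "a \<le> m \<Longrightarrow> b < n \<Longrightarrow> G a (Suc b) - G a b = lamV a b *\<^sub>R (F a (Suc b) - F a b)"
  unfolding lamV_def by (rule lam_par) (use comb edgeV_nz in \<open>auto simp: combescure_def\<close>)

definition incH where "incH t a b = lamH a b * (h t (Suc a) b - h t a b)"
definition incV where "incV t a b = lamV a b * (h t a (Suc b) - h t a b)"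

definition hG where "hG t i j = (\<Sum>k<i. incH t k 0) + (\<Sum>l<j. incV t i l)"

definition Gt where "Gt t i j = G i j + (0, 0, hG t i j)"

lemma inc_edge:
  assumes "h t a' b' = aff q (F a' b')" "h t a b = aff q (F a b)"
    "G a' b' - G a b = l *\<^sub>R (F a' b' - F a b)"
  shows "l * (h t a' b' - h t a b) = lin q (G a' b' - G a b)"
  unfolding assms aff_diff lin_scale by simp

lemma incs:
  assumes "hfit t a b q" "a < m" "b < n"
  shows "incH t a b = lin q (G (Suc a) b - G a b)"
    "incH t a (Suc b) = lin q (G (Suc a) (Suc b) - G a (Suc b))"
    "incV t a b = lin q (G a (Suc b) - G a b)"
    "incV t (Suc a) b = lin q (G (Suc a) (Suc b) - G (Suc a) b)"
proof -
  have h: "h t a b = aff q (F a b)" "h t (Suc a) b = aff q (F (Suc a) b)"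
     "h t (Suc a) (Suc b) = aff q (F (Suc a) (Suc b))" "h t a (Suc b) = aff q (F a (Suc b))"
    using assms(1) unfolding hfit_def by auto
  have lt: "a \<le> m" "Suc b \<le> n" "b \<le> n" "Suc a \<le> m" using assms(2,3) by auto
  show "incH t a b = lin q (G (Suc a) b - G a b)"
    unfolding incH_def by (rule inc_edge[OF h(2) h(1) GH[OF assms(2) lt(3)]])
  show "incH t a (Suc b) = lin q (G (Suc a) (Suc b) - G a (Suc b))"
    unfolding incH_def by (rule inc_edge[OF h(3) h(4) GH[OF assms(2) lt(2)]])
  show "incV t a b = lin q (G a (Suc b) - G a b)"
    unfolding incV_def by (rule inc_edge[OF h(4) h(1) GV[OF lt(1) assms(3)]])
  show "incV t (Suc a) b = lin q (G (Suc a) (Suc b) - G (Suc a) b)"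
    unfolding incV_def by (rule inc_edge[OF h(3) h(2) GV[OF lt(4) assms(3)]])
qed

lemma hG_V: "hG t a (Suc b) = hG t a b + incV t a b"
  by (simp add: hG_def)

lemma hG_H: "t \<in> {0..1} \<Longrightarrow> a < m \<Longrightarrow> b \<le> n \<Longrightarrow> hG t (Suc a) b = hG t a b + incH t a b"
proof (induction b)
  case 0 then show ?case by (simp add: hG_def)
next
  case (Suc b)
  then have bn: "b < n" by simp
  obtain q where q: "hfit t a b q" using hfit_ex Suc.prems bn by blast
  have c: "incH t a b + incV t (Suc a) b = incV t a b + incH t a (Suc b)"
    unfolding incs[OF q Suc.prems(2) bn] lin_add by (simp add: algebra_simps)
  have "hG t (Suc a) (Suc b) = hG t a b + incH t a b + incV t (Suc a) b"
    using Suc by (simp add: hG_V)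
  also have "\<dots> = hG t a (Suc b) + incH t a (Suc b)" using c by (simp add: hG_V)
  finally show ?case .
qed

definition shr where "shr t a b q = (px q, py q, hG t a b - lin q (G a b))"

lemma face_sh:
  assumes t: "t \<in> {0..1}" and ab: "a < m" "b < n" and q: "hfit t a b q"
  shows "Gt t a b = sh (shr t a b q) (G a b)" "Gt t (Suc a) b = sh (shr t a b q) (G (Suc a) b)"
    "Gt t (Suc a) (Suc b) = sh (shr t a b q) (G (Suc a) (Suc b))" "Gt t a (Suc b) = sh (shr t a b q) (G a (Suc b))"
proof -
  have A: "aff (shr t a b q) p = hG t a b + lin q (p - G a b)" for p
    by (simp add: shr_def aff_def lin_def algebra_simps)
  have e1: "hG t (Suc a) b = hG t a b + lin q (G (Suc a) b - G a b)"
    using hG_H[OF t ab(1)] ab incs(1)[OF q ab] by simp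
  have e3: "hG t a (Suc b) = hG t a b + lin q (G a (Suc b) - G a b)"
    using hG_V incs(3)[OF q ab] by simp
  have e2: "hG t (Suc a) (Suc b) = hG t a b + lin q (G (Suc a) (Suc b) - G a b)"
  proof -
    have "hG t (Suc a) (Suc b) = hG t (Suc a) b + lin q (G (Suc a) (Suc b) - G (Suc a) b)"
      using hG_V incs(4)[OF q ab] by simp
    also have "\<dots> = hG t a b + lin q (G (Suc a) b - G a b + (G (Suc a) (Suc b) - G (Suc a) b))"
      using e1 lin_add by (simp add: algebra_simps)
    finally show ?thesis by simp
  qed
  show "Gt t a b = sh (shr t a b q) (G a b)" by (simp add: Gt_def sh_def A lin_def)
  show "Gt t (Suc a) b = sh (shr t a b q) (G (Suc a) b)" by (simp add: Gt_def sh_def A e1)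
  show "Gt t (Suc a) (Suc b) = sh (shr t a b q) (G (Suc a) (Suc b))" by (simp add: Gt_def sh_def A e2)
  show "Gt t a (Suc b) = sh (shr t a b q) (G a (Suc b))" by (simp add: Gt_def sh_def A e3)
qed

end

context combG begin

lemma G_face: "a < m \<Longrightarrow> b < n \<Longrightarrow> \<exists>r. fitface G a b r \<and> ndegface G a b"
  using dc_face[OF dcG] by blast

lemma tp_eqG:
  assumes "a < m" "b < n" "fitface F a b \<rho>" "fitface G a b \<sigma>" "ndegface G a b"
  shows "tp \<sigma> = tp \<rho>"
proof -
  have "Suc a \<le> m" "b \<le> n" using assms(1,2) by auto
  show ?thesis
    by (rule par_grad[OF _ _ _ _ _ _ GH[OF assms(1) \<open>b \<le> n\<close>] GV[OF \<open>Suc a \<le> m\<close> assms(2)]])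
       (use assms(3-5) in \<open>simp_all add: fitface_def ndegface_def\<close>)
qed

lemma Gface:
  assumes t: "t \<in> {0..1}" and ab: "a < m" "b < n"
  shows "\<exists>q \<sigma> \<rho>. hfit t a b q \<and> fitface F a b \<rho> \<and> fitface G a b \<sigma> \<and> ndegface G a b \<and>
     fitface (Gt t) a b (\<sigma> + shr t a b q) \<and> ndegface (Gt t) a b \<and> tp (\<sigma> + shr t a b q) = tp (\<rho> + q)"
proof -
  obtain q where q: "hfit t a b q" using hfit_ex t ab by blast
  obtain \<rho> where \<rho>: "fitface F a b \<rho>" using F_face ab by blast
  obtain \<sigma> where \<sigma>: "fitface G a b \<sigma>" "ndegface G a b" using G_face ab by blast
  note fs = face_sh[OF t ab q]
  have "fitface (Gt t) a b (\<sigma> + shr t a b q)" by (rule fit_sh[OF \<sigma>(1) fs])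
  moreover have "ndegface (Gt t) a b" by (rule ndeg_sh[OF \<sigma>(2) fs(1-3)])
  moreover have "tp (\<sigma> + shr t a b q) = tp (\<rho> + q)"
    using tp_eqG[OF ab \<rho> \<sigma>] by (simp add: tp_def shr_def)
  ultimately show ?thesis using q \<rho> \<sigma> by blast
qed

lemma curvG:
  assumes t: "t \<in> {0..1}" and iv: "interior_vertex m n (Suc i) (Suc j)"
  shows "curvature (Gt t) (Suc i) (Suc j) = curvature G (Suc i) (Suc j)"
proof -
  have lt: "i < m" "Suc i < m" "j < n" "Suc j < n" using iv by (auto simp: interior_vertex_def)
  obtain q0 s0 r0 where f0: "hfit t i j q0" "fitface F i j r0" "fitface G i j s0" "ndegface G i j"
     "fitface (Gt t) i j (s0 + shr t i j q0)" "ndegface (Gt t) i j" "tp (s0 + shr t i j q0) = tp (r0 + q0)"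
    using Gface[OF t lt(1) lt(3)] by blast
  obtain q1 s1 r1 where f1: "hfit t (Suc i) j q1" "fitface F (Suc i) j r1" "fitface G (Suc i) j s1" "ndegface G (Suc i) j"
     "fitface (Gt t) (Suc i) j (s1 + shr t (Suc i) j q1)" "ndegface (Gt t) (Suc i) j" "tp (s1 + shr t (Suc i) j q1) = tp (r1 + q1)"
    using Gface[OF t lt(2) lt(3)] by blast
  obtain q2 s2 r2 where f2: "hfit t (Suc i) (Suc j) q2" "fitface F (Suc i) (Suc j) r2" "fitface G (Suc i) (Suc j) s2" "ndegface G (Suc i) (Suc j)"
     "fitface (Gt t) (Suc i) (Suc j) (s2 + shr t (Suc i) (Suc j) q2)" "ndegface (Gt t) (Suc i) (Suc j)" "tp (s2 + shr t (Suc i) (Suc j) q2) = tp (r2 + q2)"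
    using Gface[OF t lt(2) lt(4)] by blast
  obtain q3 s3 r3 where f3: "hfit t i (Suc j) q3" "fitface F i (Suc j) r3" "fitface G i (Suc j) s3" "ndegface G i (Suc j)"
     "fitface (Gt t) i (Suc j) (s3 + shr t i (Suc j) q3)" "ndegface (Gt t) i (Suc j)" "tp (s3 + shr t i (Suc j) q3) = tp (r3 + q3)"
    using Gface[OF t lt(1) lt(4)] by blast
  have "curvature (Gt t) (Suc i) (Suc j) = 1/2 * Qd (tp (r0 + q0)) (tp (r1 + q1)) (tp (r2 + q2)) (tp (r3 + q3))"
    using curv_fit[OF iv, of "Gt t"] f0 f1 f2 f3 by simp
  also have "\<dots> = 1/2 * Qd (tp r0) (tp r1) (tp r2) (tp r3)"
    using curvF[OF t iv f0(2) f1(2) f2(2) f3(2) f0(1) f1(1) f2(1) f3(1)] by simp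
  also have "\<dots> = 1/2 * Qd (tp s0) (tp s1) (tp s2) (tp s3)"
    using tp_eqG[OF lt(1) lt(3) f0(2-4)] tp_eqG[OF lt(2) lt(3) f1(2-4)]
      tp_eqG[OF lt(2) lt(4) f2(2-4)] tp_eqG[OF lt(1) lt(4) f3(2-4)] by simp
  also have "\<dots> = curvature G (Suc i) (Suc j)"
    using curv_fit[OF iv, of G] f0 f1 f2 f3 by simp
  finally show ?thesis .
qed

end

context combG begin

lemma hG_cont: "i \<le> m \<Longrightarrow> j \<le> n \<Longrightarrow> continuous_on {0..1} (\<lambda>t. hG t i j)"
  unfolding hG_def incH_def incV_def
  by (intro continuous_intros h_cont) auto

lemma hG_zero: "i \<le> m \<Longrightarrow> j \<le> n \<Longrightarrow> hG 0 i j = 0"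
proof -
  assume ij: "i \<le> m" "j \<le> n"
  have "(\<Sum>k<i. incH 0 k 0) = 0" by (rule sum.neutral) (use ij in \<open>auto simp: incH_def h_zero\<close>)
  moreover have "(\<Sum>l<j. incV 0 i l) = 0" by (rule sum.neutral) (use ij in \<open>auto simp: incV_def h_zero\<close>)
  ultimately show ?thesis by (simp add: hG_def)
qed

lemma Gcq: "i < m \<Longrightarrow> j < n \<Longrightarrow> convex_quad (G i j) (G (Suc i) j) (G (Suc i) (Suc j)) (G i (Suc j))"
  using dcG unfolding dual_convex_def is_net_def by blast

lemma comb_flexible:
  assumes nt: "\<not> (\<forall>t\<in>{0..1}. \<exists>phi c1 c2 b. \<forall>i\<le>m. \<forall>j\<le>n. Ft t i j = iso_cong phi c1 c2 b (F i j))"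
  shows "flexible m n G"
  unfolding flexible_def
proof (intro exI[of _ Gt] conjI)
  show "\<forall>i\<le>m. \<forall>j\<le>n. continuous_on {0..1} (\<lambda>t. Gt t i j)"
    unfolding Gt_def by (auto intro!: continuous_intros hG_cont)
  show "\<forall>i\<le>m. \<forall>j\<le>n. Gt 0 i j = G i j"
    by (simp add: Gt_def hG_zero zero_prod_def)
  show "\<forall>t\<in>{0..1}. is_net m n (Gt t)"
    unfolding is_net_def
  proof (intro ballI allI impI)
    fix t :: real and a b :: nat assume t: "t \<in> {0..1}" and ab: "a < m" "b < n"
    obtain q where q: "hfit t a b q" using hfit_ex t ab by blast
    show "convex_quad (Gt t a b) (Gt t (Suc a) b) (Gt t (Suc a) (Suc b)) (Gt t a (Suc b))"
      unfolding face_sh[OF t ab q] by (rule cq_sh[OF Gcq[OF ab]])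
  qed
  show "\<forall>t\<in>{0..1}. \<forall>i<m. \<forall>j<n. \<exists>phi c1 c2 b.
            \<forall>(k, l) \<in> {(i, j), (Suc i, j), (Suc i, Suc j), (i, Suc j)}.
               Gt t k l = iso_cong phi c1 c2 b (G k l)"
  proof (intro ballI allI impI)
    fix t :: real and a b :: nat assume t: "t \<in> {0..1}" and ab: "a < m" "b < n"
    obtain q where q: "hfit t a b q" using hfit_ex t ab by blast
    let ?r = "shr t a b q"
    show "\<exists>phi c1 c2 bb. \<forall>(k, l) \<in> {(a, b), (Suc a, b), (Suc a, Suc b), (a, Suc b)}.
               Gt t k l = iso_cong phi c1 c2 bb (G k l)"
      by (intro exI[of _ 0] exI[of _ "px ?r"] exI[of _ "py ?r"] exI[of _ "(0,0,pz ?r)"])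
         (simp add: iso_sh face_sh[OF t ab q])
  qed
  show "\<forall>t\<in>{0..1}. \<forall>i j. interior_vertex m n i j \<longrightarrow> curvature (Gt t) i j = curvature G i j"
  proof (intro ballI allI impI)
    fix t :: real and i j :: nat assume t: "t \<in> {0..1}" and iv: "interior_vertex m n i j"
    obtain i0 j0 where ij: "i = Suc i0" "j = Suc j0" using iv unfolding interior_vertex_def
      by (metis gr0_implies_Suc)
    show "curvature (Gt t) i j = curvature G i j" using curvG[OF t] iv unfolding ij by blast
  qed
  show "\<not> (\<forall>t\<in>{0..1}. \<exists>phi c1 c2 b. \<forall>i\<le>m. \<forall>j\<le>n. Gt t i j = iso_cong phi c1 c2 b (G i j))"
  proof
    assume gl: "\<forall>t\<in>{0..1}. \<exists>phi c1 c2 b. \<forall>i\<le>m. \<forall>j\<le>n. Gt t i j = iso_cong phi c1 c2 b (G i j)"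
    have "\<exists>phi c1 c2 b. \<forall>i\<le>m. \<forall>j\<le>n. Ft t i j = iso_cong phi c1 c2 b (F i j)" if t: "t \<in> {0..1}" for t :: real
    proof -
      obtain phi c1 c2 bb where g: "\<forall>i\<le>m. \<forall>j\<le>n. Gt t i j = iso_cong phi c1 c2 bb (G i j)"
        using gl t by blast
      have hg: "hG t i j = aff (c1, c2, pz bb) (G i j)" if "i \<le> m" "j \<le> n" for i j
        using arg_cong[OF g[rule_format, OF that], of pz] by (simp add: Gt_def iso_cong_def aff_def)
      have "\<forall>a<m. \<forall>b<n. \<exists>q. hfit t a b q \<and> px q = c1 \<and> py q = c2"
      proof (intro allI impI)
        fix a b assume ab: "a < m" "b < n"
        obtain q where q: "hfit t a b q" using hfit_ex t ab by blast
        obtain \<sigma> where \<sigma>: "ndegface G a b" using G_face ab by blast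
        note fs = face_sh[OF t ab q]
        have e: "aff (shr t a b q) (G a' b') = aff (c1, c2, pz bb) (G a' b')"
          if "Gt t a' b' = sh (shr t a b q) (G a' b')" "a' \<le> m" "b' \<le> n" for a' b'
          using arg_cong[OF that(1), of pz] hg[OF that(2,3)] by (simp add: Gt_def)
        have "shr t a b q = (c1, c2, pz bb)"
          using uniq_aff[OF \<sigma>[unfolded ndegface_def]] e[OF fs(1)] e[OF fs(2)] e[OF fs(3)] ab by simp
        then have "px q = c1 \<and> py q = c2" by (simp add: shr_def)
        then show "\<exists>q. hfit t a b q \<and> px q = c1 \<and> py q = c2" using q by blast
      qed
      then obtain \<gamma> where "\<forall>i\<le>m. \<forall>j\<le>n. h t i j = aff \<gamma> (F i j)" using local_to_global[OF t] by blast
      then show ?thesis using nontriv[OF t] by blast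
    qed
    then show False using nt by blast
  qed
qed

end

definition KTn :: "pt \<Rightarrow> pt \<Rightarrow> pt \<Rightarrow> pt \<Rightarrow> pt" where
  "KTn n1 n2 n4 u = px u *\<^sub>R n1 + py u *\<^sub>R n2 + pz u *\<^sub>R n4"

lemma aff_KTn: "aff (KTn n1 n2 n4 u) p = px u * aff n1 p + py u * aff n2 p + pz u * aff n4 p"
  by (simp add: KTn_def aff_def algebra_simps)

lemma KTn_diff: "KTn n1 n2 n4 (u - v) = KTn n1 n2 n4 u - KTn n1 n2 n4 v"
  by (simp add: KTn_def algebra_simps)

lemma KTn_add: "KTn n1 n2 n4 (u + v) = KTn n1 n2 n4 u + KTn n1 n2 n4 v"
  by (simp add: KTn_def algebra_simps)

lemma aff_lin: "aff (u - v) p = aff u p - aff v p" "aff (u + v) p = aff u p + aff v p"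
  "aff (c *\<^sub>R u) p = c * aff u p"
  by (simp_all add: aff_def algebra_simps)

lemma det3_mult:
  "det3 (KTn n1 n2 n4 a) (KTn n1 n2 n4 b) (KTn n1 n2 n4 c) = det3 n1 n2 n4 * det3 a b c"
  unfolding det3_def KTn_def by (simp only: pcomp_ops) algebra

lemma det3_e3: "det3 a b (0,0,1) = det2 (tp a) (tp b)"
  by (simp add: det3_def tp_def)

lemma det3_perp:
  assumes "aff a p = 0" "aff b p = 0"
  shows "det3 a b n = aff n p * det2 (tp a) (tp b)"
proof -
  have a3: "pz a = - (px a * px p + py a * py p)" using assms(1) by (simp add: aff_def)
  have b3: "pz b = - (px b * px p + py b * py p)" using assms(2) by (simp add: aff_def)
  show ?thesis unfolding det3_def aff_def tp_def det2_def a3 b3 by simp algebra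
qed

lemma KTn_e3: "KTn n1 n2 n4 (0,0,1) = n4"
  by (simp add: KTn_def)

lemma lemA:
  assumes "KTn n1 n2 n4 a' = a" "KTn n1 n2 n4 b' = b" "aff a p = 0" "aff b p = 0"
  shows "det3 n1 n2 n4 * det2 (tp a') (tp b') = aff n4 p * det2 (tp a) (tp b)"
proof -
  have "det3 n1 n2 n4 * det2 (tp a') (tp b') = det3 (KTn n1 n2 n4 a') (KTn n1 n2 n4 b') (KTn n1 n2 n4 (0,0,1))"
    unfolding det3_mult det3_e3 ..
  also have "\<dots> = det3 a b n4" unfolding assms(1,2) KTn_e3 ..
  also have "\<dots> = aff n4 p * det2 (tp a) (tp b)" by (rule det3_perp[OF assms(3,4)])
  finally show ?thesis .
qed

lemma tp_diff: "tp (u - v) = tp u - tp v" "tp (c *\<^sub>R u) = c *\<^sub>R tp u"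
  by (simp_all add: tp_def)

lemma det2_scale: "det2 (c *\<^sub>R u) (c *\<^sub>R v) = c^2 * det2 u v"
  by (cases u; cases v) (simp add: power2_eq_square algebra_simps)

lemma QdK:
  assumes k1: "KTn n1 n2 n4 (s1 - s0) = c *\<^sub>R (r1 - r0)"
    and k2: "KTn n1 n2 n4 (s2 - s0) = c *\<^sub>R (r2 - r0)"
    and k3: "KTn n1 n2 n4 (s3 - s0) = c *\<^sub>R (r3 - r0)"
    and p: "aff r0 p = z" "aff r1 p = z" "aff r2 p = z" "aff r3 p = z"
  shows "det3 n1 n2 n4 * Qd (tp s0) (tp s1) (tp s2) (tp s3) = aff n4 p * c^2 * Qd (tp r0) (tp r1) (tp r2) (tp r3)"
proof -
  have z: "aff (c *\<^sub>R (r1 - r0)) p = 0" "aff (c *\<^sub>R (r2 - r0)) p = 0" "aff (c *\<^sub>R (r3 - r0)) p = 0"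
    using p by (simp_all add: aff_lin)
  have A1: "det3 n1 n2 n4 * det2 (tp (s1 - s0)) (tp (s2 - s0)) = aff n4 p * c^2 * det2 (tp (r1 - r0)) (tp (r2 - r0))"
    using lemA[OF k1 k2 z(1,2)] by (simp add: tp_diff det2_scale)
  have A2: "det3 n1 n2 n4 * det2 (tp (s2 - s0)) (tp (s3 - s0)) = aff n4 p * c^2 * det2 (tp (r2 - r0)) (tp (r3 - r0))"
    using lemA[OF k2 k3 z(2,3)] by (simp add: tp_diff det2_scale)
  show ?thesis unfolding Qd_trans using A1 A2 by (simp add: tp_diff algebra_simps)
qed

lemma Mv: "(M *v hom p) $ k = M$k$1 * px p + M$k$2 * py p + M$k$3 * pz p + M$k$4"
  by (simp add: matrix_vector_mult_def sum_4 hom_def)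

lemma Mz: "(M *v z_infinity) $ k = M$k$3"
  by (simp add: matrix_vector_mult_def sum_4 z_infinity_def)

lemma vM: fixes v :: "real^4" and M :: "real^'n^4" shows "(v v* M) $ k = v$1 * M$1$k + v$2 * M$2$k + v$3 * M$3$k + v$4 * M$4$k"
  by (simp add: vector_matrix_mult_def sum_4 algebra_simps)

locale daG = flexF +
  fixes G :: "nat \<Rightarrow> nat \<Rightarrow> pt" and M :: "real^4^4"
  assumes dcG: "dual_convex m n G" and da: "dual_affine M"
    and img: "\<forall>i\<le>m. \<forall>j\<le>n. (M *v hom (F i j)) $ 4 \<noteq> 0 \<and> G i j = dehom (M *v hom (F i j))"
begin

definition cM where "cM = M$3$3"
definition NN :: "4 \<Rightarrow> pt" where "NN k = (M$k$1, M$k$2, M$k$4)"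
definition KT where "KT = KTn (NN 1) (NN 2) (NN 4)"

lemma col3: "M$1$3 = 0" "M$2$3 = 0" "M$4$3 = 0"
proof -
  obtain c where c: "M *v z_infinity = c *\<^sub>R z_infinity" using da by (auto simp: dual_affine_def)
  have "M$k$3 = c * z_infinity $ k" for k using arg_cong[OF c, of "\<lambda>v. v $ k"] by (simp add: Mz)
  then show "M$1$3 = 0" "M$2$3 = 0" "M$4$3 = 0" by (simp_all add: z_infinity_def)
qed

lemma cM_nz: "cM \<noteq> 0"
proof
  assume c0: "cM = 0"
  have "\<forall>k. (M *v z_infinity) $ k = 0 $ k"
    unfolding forall_4 Mz using c0 col3 by (simp add: cM_def)
  then have "M *v z_infinity = 0" by (simp add: vec_eq_iff)
  moreover obtain Mi where "Mi ** M = mat 1" using da by (auto simp: dual_affine_def invertible_def)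
  ultimately have "z_infinity = Mi *v 0"
    by (metis matrix_vector_mul_assoc matrix_vector_mul_lid)
  then have "z_infinity $ 3 = 0" by simp
  then show False by (simp add: z_infinity_def)
qed

lemma Mv_aff: "(M *v hom p) $ k = aff (NN k) p + M$k$3 * pz p"
  by (simp add: Mv NN_def aff_def algebra_simps)

lemma w_eq: "(M *v hom p) $ 4 = aff (NN 4) p"
  using col3 by (simp add: Mv_aff)

lemma w_nz: "i \<le> m \<Longrightarrow> j \<le> n \<Longrightarrow> aff (NN 4) (F i j) \<noteq> 0"
proof -
  assume "i \<le> m" "j \<le> n"
  then have "(M *v hom (F i j)) $ 4 \<noteq> 0" using img by blast
  then show ?thesis unfolding w_eq .
qed

lemma Gc:
  assumes "i \<le> m" "j \<le> n"
  shows "px (G i j) * aff (NN 4) (F i j) = aff (NN 1) (F i j)"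
    "py (G i j) * aff (NN 4) (F i j) = aff (NN 2) (F i j)"
    "pz (G i j) * aff (NN 4) (F i j) = aff (NN 3) (F i j) + cM * pz (F i j)"
proof -
  have g: "G i j = dehom (M *v hom (F i j))" using img assms by blast
  have wn: "aff (NN 4) (F i j) \<noteq> 0" by (rule w_nz[OF assms])
  have d: "x / aff (NN 4) (F i j) * aff (NN 4) (F i j) = x" for x using wn by simp
  have "px (G i j) = aff (NN 1) (F i j) / aff (NN 4) (F i j)"
    unfolding g dehom_def pcomp w_eq by (simp add: Mv_aff col3)
  then show "px (G i j) * aff (NN 4) (F i j) = aff (NN 1) (F i j)" using d by simp
  have "py (G i j) = aff (NN 2) (F i j) / aff (NN 4) (F i j)"
    unfolding g dehom_def pcomp w_eq by (simp add: Mv_aff col3)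
  then show "py (G i j) * aff (NN 4) (F i j) = aff (NN 2) (F i j)" using d by simp
  have "pz (G i j) = (aff (NN 3) (F i j) + cM * pz (F i j)) / aff (NN 4) (F i j)"
    unfolding g dehom_def pcomp w_eq by (simp add: Mv_aff cM_def)
  then show "pz (G i j) * aff (NN 4) (F i j) = aff (NN 3) (F i j) + cM * pz (F i j)" using d by simp
qed

lemma aff_G: "i \<le> m \<Longrightarrow> j \<le> n \<Longrightarrow> aff u (G i j) * aff (NN 4) (F i j) = aff (KT u) (F i j)"
proof -
  assume ij: "i \<le> m" "j \<le> n"
  have "aff u (G i j) * aff (NN 4) (F i j) = px u * (px (G i j) * aff (NN 4) (F i j)) + py u * (py (G i j) * aff (NN 4) (F i j)) + pz u * aff (NN 4) (F i j)"
    by (simp add: aff_def[of u] algebra_simps)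
  also have "\<dots> = aff (KT u) (F i j)" unfolding Gc(1,2)[OF ij] KT_def aff_KTn ..
  finally show ?thesis .
qed

lemma KT_surj: "\<exists>a. KT a = r"
proof -
  obtain Mi where Mi: "Mi ** M = mat 1" using da by (auto simp: dual_affine_def invertible_def)
  define rr :: "real^4" where "rr = (\<chi> k. if k = 1 then px r else if k = 2 then py r else if k = 3 then 0 else pz r)"
  define \<beta> where "\<beta> = rr v* Mi"
  have b: "\<beta> v* M = rr" unfolding \<beta>_def vector_matrix_mul_assoc Mi by simp
  have e: "\<beta>$1 * M$1$k + \<beta>$2 * M$2$k + \<beta>$3 * M$3$k + \<beta>$4 * M$4$k = rr $ k" for k
    using arg_cong[OF b, of "\<lambda>v. v $ k"] by (simp add: vM)
  have "\<beta>$3 * cM = 0" using e[of 3] col3 by (simp add: rr_def cM_def)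
  then have b3: "\<beta>$3 = 0" using cM_nz by simp
  have "KT (\<beta>$1, \<beta>$2, \<beta>$4) = r"
    using e[of 1] e[of 2] e[of 4] b3 by (simp add: KT_def KTn_def NN_def rr_def pt_eq algebra_simps)
  then show ?thesis by blast
qed

lemma D_nz: "det3 (NN 1) (NN 2) (NN 4) \<noteq> 0"
proof -
  obtain e1 e2 e3 where "KT e1 = (1,0,0)" "KT e2 = (0,1,0)" "KT e3 = (0,0,1)" using KT_surj by metis
  then have "det3 (1,0,0) (0,1,0) (0,0,1) = det3 (NN 1) (NN 2) (NN 4) * det3 e1 e2 e3"
    using det3_mult[of "NN 1" "NN 2" "NN 4" e1 e2 e3] unfolding KT_def by simp
  then show ?thesis by (auto simp: det3_def)
qed

end

context daG begin

definition Gt where "Gt t i j = G i j + (0, 0, cM * h t i j / aff (NN 4) (F i j))"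

lemma G_face: "a < m \<Longrightarrow> b < n \<Longrightarrow> \<exists>r. fitface G a b r \<and> ndegface G a b"
  using dc_face[OF dcG] by blast

lemma E1:
  assumes ab: "a < m" "b < n" and \<rho>: "fitface F a b \<rho>" and \<sigma>: "fitface G a b \<sigma>"
  shows "KT \<sigma> = NN 3 + cM *\<^sub>R \<rho>"
proof -
  have nd: "ndegface F a b" using F_face ab by blast
  have e: "aff (KT \<sigma>) (F i j) = aff (NN 3 + cM *\<^sub>R \<rho>) (F i j)"
    if "i \<le> m" "j \<le> n" "onpl \<rho> (F i j)" "onpl \<sigma> (G i j)" for i j
  proof -
    have "aff (KT \<sigma>) (F i j) = aff \<sigma> (G i j) * aff (NN 4) (F i j)" using aff_G that(1,2) by simp
    also have "\<dots> = pz (G i j) * aff (NN 4) (F i j)" using that(4) by (simp add: onpl_def)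
    also have "\<dots> = aff (NN 3) (F i j) + cM * pz (F i j)" using Gc(3)[OF that(1,2)] .
    also have "\<dots> = aff (NN 3 + cM *\<^sub>R \<rho>) (F i j)" using that(3) by (simp add: onpl_def aff_lin)
    finally show ?thesis .
  qed
  have lt: "a \<le> m" "b \<le> n" "Suc a \<le> m" "Suc b \<le> n" using ab by auto
  show ?thesis
    apply (rule uniq_aff[OF nd[unfolded ndegface_def]])
    using e[OF lt(1,2)] e[OF lt(3,2)] e[OF lt(3,4)] \<rho> \<sigma> unfolding fitface_def by auto
qed

lemma alpha_sh:
  assumes ij: "i \<le> m" "j \<le> n" and q: "h t i j = aff q (F i j)" and \<alpha>: "KT \<alpha> = cM *\<^sub>R q"
  shows "Gt t i j = sh \<alpha> (G i j)"
proof -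
  have wn: "aff (NN 4) (F i j) \<noteq> 0" by (rule w_nz[OF ij])
  have "aff \<alpha> (G i j) * aff (NN 4) (F i j) = cM * h t i j"
    using aff_G[OF ij, of \<alpha>] unfolding \<alpha> q by (simp add: aff_lin)
  then have "aff \<alpha> (G i j) = cM * h t i j / aff (NN 4) (F i j)" using wn by (simp add: field_simps)
  then show ?thesis by (simp add: Gt_def sh_def)
qed

lemma Gface:
  assumes t: "t \<in> {0..1}" and ab: "a < m" "b < n"
  shows "\<exists>q \<sigma> \<rho> \<alpha>. hfit t a b q \<and> fitface F a b \<rho> \<and> fitface G a b \<sigma> \<and> ndegface G a b \<and>
     KT \<sigma> = NN 3 + cM *\<^sub>R \<rho> \<and> KT \<alpha> = cM *\<^sub>R q \<and>
     Gt t a b = sh \<alpha> (G a b) \<and> Gt t (Suc a) b = sh \<alpha> (G (Suc a) b) \<and>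
     Gt t (Suc a) (Suc b) = sh \<alpha> (G (Suc a) (Suc b)) \<and> Gt t a (Suc b) = sh \<alpha> (G a (Suc b)) \<and>
     fitface (Gt t) a b (\<sigma> + \<alpha>) \<and> ndegface (Gt t) a b"
proof -
  obtain q where q: "hfit t a b q" using hfit_ex t ab by blast
  obtain \<rho> where \<rho>: "fitface F a b \<rho>" using F_face ab by blast
  obtain \<sigma> where \<sigma>: "fitface G a b \<sigma>" "ndegface G a b" using G_face ab by blast
  obtain \<alpha> where \<alpha>: "KT \<alpha> = cM *\<^sub>R q" using KT_surj by blast
  have lt: "a \<le> m" "b \<le> n" "Suc a \<le> m" "Suc b \<le> n" using ab by auto
  have fs: "Gt t a b = sh \<alpha> (G a b)" "Gt t (Suc a) b = sh \<alpha> (G (Suc a) b)"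
     "Gt t (Suc a) (Suc b) = sh \<alpha> (G (Suc a) (Suc b))" "Gt t a (Suc b) = sh \<alpha> (G a (Suc b))"
    using alpha_sh[OF lt(1,2) _ \<alpha>] alpha_sh[OF lt(3,2) _ \<alpha>] alpha_sh[OF lt(3,4) _ \<alpha>] alpha_sh[OF lt(1,4) _ \<alpha>] q
    unfolding hfit_def by auto
  have "fitface (Gt t) a b (\<sigma> + \<alpha>)" by (rule fit_sh[OF \<sigma>(1) fs])
  moreover have "ndegface (Gt t) a b" by (rule ndeg_sh[OF \<sigma>(2) fs(1-3)])
  moreover have "KT \<sigma> = NN 3 + cM *\<^sub>R \<rho>" by (rule E1[OF ab \<rho> \<sigma>(1)])
  ultimately show ?thesis using q \<rho> \<sigma> \<alpha> fs by blast
qed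

end

context daG begin

lemma KT_diff: "KT (u - v) = KT u - KT v" "KT (u + v) = KT u + KT v"
  unfolding KT_def by (simp_all add: KTn_diff KTn_add)

lemma curvDA:
  assumes t: "t \<in> {0..1}" and iv: "interior_vertex m n (Suc i) (Suc j)"
  shows "curvature (Gt t) (Suc i) (Suc j) = curvature G (Suc i) (Suc j)"
proof -
  have lt: "i < m" "Suc i < m" "j < n" "Suc j < n" using iv by (auto simp: interior_vertex_def)
  obtain q0 s0 r0 a0 where f0: "hfit t i j q0" "fitface F i j r0" "fitface G i j s0" "ndegface G i j"
     "KT s0 = NN 3 + cM *\<^sub>R r0" "KT a0 = cM *\<^sub>R q0"
     "fitface (Gt t) i j (s0 + a0)" "ndegface (Gt t) i j"
    using Gface[OF t lt(1) lt(3)] by blast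
  obtain q1 s1 r1 a1 where f1: "hfit t (Suc i) j q1" "fitface F (Suc i) j r1" "fitface G (Suc i) j s1" "ndegface G (Suc i) j"
     "KT s1 = NN 3 + cM *\<^sub>R r1" "KT a1 = cM *\<^sub>R q1"
     "fitface (Gt t) (Suc i) j (s1 + a1)" "ndegface (Gt t) (Suc i) j"
    using Gface[OF t lt(2) lt(3)] by blast
  obtain q2 s2 r2 a2 where f2: "hfit t (Suc i) (Suc j) q2" "fitface F (Suc i) (Suc j) r2" "fitface G (Suc i) (Suc j) s2" "ndegface G (Suc i) (Suc j)"
     "KT s2 = NN 3 + cM *\<^sub>R r2" "KT a2 = cM *\<^sub>R q2"
     "fitface (Gt t) (Suc i) (Suc j) (s2 + a2)" "ndegface (Gt t) (Suc i) (Suc j)"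
    using Gface[OF t lt(2) lt(4)] by blast
  obtain q3 s3 r3 a3 where f3: "hfit t i (Suc j) q3" "fitface F i (Suc j) r3" "fitface G i (Suc j) s3" "ndegface G i (Suc j)"
     "KT s3 = NN 3 + cM *\<^sub>R r3" "KT a3 = cM *\<^sub>R q3"
     "fitface (Gt t) i (Suc j) (s3 + a3)" "ndegface (Gt t) i (Suc j)"
    using Gface[OF t lt(1) lt(4)] by blast
  let ?V = "F (Suc i) (Suc j)"
  have rV: "aff r0 ?V = pz ?V" "aff r1 ?V = pz ?V" "aff r2 ?V = pz ?V" "aff r3 ?V = pz ?V"
    using f0(2) f1(2) f2(2) f3(2) unfolding fitface_def onpl_def by auto
  have qV: "aff q0 ?V = h t (Suc i) (Suc j)" "aff q1 ?V = h t (Suc i) (Suc j)"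
     "aff q2 ?V = h t (Suc i) (Suc j)" "aff q3 ?V = h t (Suc i) (Suc j)"
    using f0(1) f1(1) f2(1) f3(1) unfolding hfit_def by auto
  let ?D = "det3 (NN 1) (NN 2) (NN 4)"
  let ?W = "aff (NN 4) ?V * cM^2"
  have kd: "KT (sk - s0) = cM *\<^sub>R (rk - r0)" if "KT sk = NN 3 + cM *\<^sub>R rk" for sk rk
    unfolding KT_diff that f0(5) by (simp add: algebra_simps)
  have A: "?D * Qd (tp s0) (tp s1) (tp s2) (tp s3) = ?W * Qd (tp r0) (tp r1) (tp r2) (tp r3)"
    using QdK[of "NN 1" "NN 2" "NN 4" s1 s0 cM r1 r0 s2 r2 s3 r3 ?V "pz ?V"] kd[OF f1(5)] kd[OF f2(5)] kd[OF f3(5)] rV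
    unfolding KT_def by (simp add: mult.assoc)
  have kd2: "KT ((sk + ak) - (s0 + a0)) = cM *\<^sub>R ((rk + qk) - (r0 + q0))"
    if "KT sk = NN 3 + cM *\<^sub>R rk" "KT ak = cM *\<^sub>R qk" for sk rk ak qk
    unfolding KT_diff that f0(5) f0(6) by (simp add: algebra_simps)
  have rqV: "aff (r0 + q0) ?V = pz ?V + h t (Suc i) (Suc j)" "aff (r1 + q1) ?V = pz ?V + h t (Suc i) (Suc j)"
    "aff (r2 + q2) ?V = pz ?V + h t (Suc i) (Suc j)" "aff (r3 + q3) ?V = pz ?V + h t (Suc i) (Suc j)"
    using rV qV by (simp_all add: aff_lin)
  have B: "?D * Qd (tp (s0 + a0)) (tp (s1 + a1)) (tp (s2 + a2)) (tp (s3 + a3)) =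
      ?W * Qd (tp (r0 + q0)) (tp (r1 + q1)) (tp (r2 + q2)) (tp (r3 + q3))"
    using QdK[of "NN 1" "NN 2" "NN 4" "s1 + a1" "s0 + a0" cM "r1 + q1" "r0 + q0" "s2 + a2" "r2 + q2" "s3 + a3" "r3 + q3" ?V "pz ?V + h t (Suc i) (Suc j)"]
      kd2[OF f1(5,6)] kd2[OF f2(5,6)] kd2[OF f3(5,6)] rqV
    unfolding KT_def by (simp add: mult.assoc)
  have C: "Qd (tp (r0 + q0)) (tp (r1 + q1)) (tp (r2 + q2)) (tp (r3 + q3)) = Qd (tp r0) (tp r1) (tp r2) (tp r3)"
    by (rule curvF[OF t iv f0(2) f1(2) f2(2) f3(2) f0(1) f1(1) f2(1) f3(1)])
  have "?D * Qd (tp (s0 + a0)) (tp (s1 + a1)) (tp (s2 + a2)) (tp (s3 + a3)) = ?D * Qd (tp s0) (tp s1) (tp s2) (tp s3)"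
    using A B C by simp
  then have E: "Qd (tp (s0 + a0)) (tp (s1 + a1)) (tp (s2 + a2)) (tp (s3 + a3)) = Qd (tp s0) (tp s1) (tp s2) (tp s3)"
    using D_nz by simp
  have "curvature (Gt t) (Suc i) (Suc j) = 1/2 * Qd (tp (s0 + a0)) (tp (s1 + a1)) (tp (s2 + a2)) (tp (s3 + a3))"
    using curv_fit[OF iv, of "Gt t"] f0 f1 f2 f3 by simp
  also have "\<dots> = curvature G (Suc i) (Suc j)"
    using curv_fit[OF iv, of G] f0 f1 f2 f3 E by simp
  finally show ?thesis .
qed

end

context daG begin

lemma Gcq: "i < m \<Longrightarrow> j < n \<Longrightarrow> convex_quad (G i j) (G (Suc i) j) (G (Suc i) (Suc j)) (G i (Suc j))"
  using dcG unfolding dual_convex_def is_net_def by blast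

lemma da_flexible:
  assumes nt: "\<not> (\<forall>t\<in>{0..1}. \<exists>phi c1 c2 b. \<forall>i\<le>m. \<forall>j\<le>n. Ft t i j = iso_cong phi c1 c2 b (F i j))"
  shows "flexible m n G"
  unfolding flexible_def
proof (intro exI[of _ Gt] conjI)
  show "\<forall>i\<le>m. \<forall>j\<le>n. continuous_on {0..1} (\<lambda>t. Gt t i j)"
    unfolding Gt_def by (auto intro!: continuous_intros h_cont dest: w_nz)
  show "\<forall>i\<le>m. \<forall>j\<le>n. Gt 0 i j = G i j"
    by (simp add: Gt_def h_zero zero_prod_def)
  show "\<forall>t\<in>{0..1}. is_net m n (Gt t)"
    unfolding is_net_def
  proof (intro ballI allI impI)
    fix t :: real and a b :: nat assume t: "t \<in> {0..1}" and ab: "a < m" "b < n"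
    obtain q s r \<alpha> where fs: "Gt t a b = sh \<alpha> (G a b)" "Gt t (Suc a) b = sh \<alpha> (G (Suc a) b)"
     "Gt t (Suc a) (Suc b) = sh \<alpha> (G (Suc a) (Suc b))" "Gt t a (Suc b) = sh \<alpha> (G a (Suc b))"
      using Gface[OF t ab] by blast
    show "convex_quad (Gt t a b) (Gt t (Suc a) b) (Gt t (Suc a) (Suc b)) (Gt t a (Suc b))"
      unfolding fs by (rule cq_sh[OF Gcq[OF ab]])
  qed
  show "\<forall>t\<in>{0..1}. \<forall>i<m. \<forall>j<n. \<exists>phi c1 c2 b.
            \<forall>(k, l) \<in> {(i, j), (Suc i, j), (Suc i, Suc j), (i, Suc j)}.
               Gt t k l = iso_cong phi c1 c2 b (G k l)"
  proof (intro ballI allI impI)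
    fix t :: real and a b :: nat assume t: "t \<in> {0..1}" and ab: "a < m" "b < n"
    obtain q s r \<alpha> where fs: "Gt t a b = sh \<alpha> (G a b)" "Gt t (Suc a) b = sh \<alpha> (G (Suc a) b)"
     "Gt t (Suc a) (Suc b) = sh \<alpha> (G (Suc a) (Suc b))" "Gt t a (Suc b) = sh \<alpha> (G a (Suc b))"
      using Gface[OF t ab] by blast
    show "\<exists>phi c1 c2 bb. \<forall>(k, l) \<in> {(a, b), (Suc a, b), (Suc a, Suc b), (a, Suc b)}.
               Gt t k l = iso_cong phi c1 c2 bb (G k l)"
      by (intro exI[of _ 0] exI[of _ "px \<alpha>"] exI[of _ "py \<alpha>"] exI[of _ "(0,0,pz \<alpha>)"])
         (simp add: iso_sh fs)
  qed
  show "\<forall>t\<in>{0..1}. \<forall>i j. interior_vertex m n i j \<longrightarrow> curvature (Gt t) i j = curvature G i j"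
  proof (intro ballI allI impI)
    fix t :: real and i j :: nat assume t: "t \<in> {0..1}" and iv: "interior_vertex m n i j"
    obtain i0 j0 where ij: "i = Suc i0" "j = Suc j0" using iv unfolding interior_vertex_def
      by (metis gr0_implies_Suc)
    show "curvature (Gt t) i j = curvature G i j" using curvDA[OF t] iv unfolding ij by blast
  qed
  show "\<not> (\<forall>t\<in>{0..1}. \<exists>phi c1 c2 b. \<forall>i\<le>m. \<forall>j\<le>n. Gt t i j = iso_cong phi c1 c2 b (G i j))"
  proof
    assume gl: "\<forall>t\<in>{0..1}. \<exists>phi c1 c2 b. \<forall>i\<le>m. \<forall>j\<le>n. Gt t i j = iso_cong phi c1 c2 b (G i j)"
    have "\<exists>phi c1 c2 b. \<forall>i\<le>m. \<forall>j\<le>n. Ft t i j = iso_cong phi c1 c2 b (F i j)" if t: "t \<in> {0..1}" for t :: real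
    proof -
      obtain phi c1 c2 bb where g: "\<forall>i\<le>m. \<forall>j\<le>n. Gt t i j = iso_cong phi c1 c2 bb (G i j)"
        using gl t by blast
      have "h t i j = aff ((1 / cM) *\<^sub>R KT (c1, c2, pz bb)) (F i j)" if ij: "i \<le> m" "j \<le> n" for i j
      proof -
        have "cM * h t i j / aff (NN 4) (F i j) = aff (c1, c2, pz bb) (G i j)"
          using arg_cong[OF g[rule_format, OF ij], of pz] by (simp add: Gt_def iso_cong_def aff_def)
        then have "cM * h t i j = aff (c1, c2, pz bb) (G i j) * aff (NN 4) (F i j)"
          using w_nz[OF ij] by (simp add: field_simps)
        also have "\<dots> = aff (KT (c1, c2, pz bb)) (F i j)" by (rule aff_G[OF ij])
        finally show ?thesis using cM_nz by (simp add: aff_lin field_simps)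
      qed
      then show ?thesis using nontriv[OF t] by blast
    qed
    then show False using nt by blast
  qed
qed

end

theorem corollary3:
  fixes m n :: nat and F :: "nat \<Rightarrow> nat \<Rightarrow> pt"
  assumes "dual_convex m n F" and "flexible m n F"
  shows "(\<forall>G. dual_convex m n G \<and> combescure m n F G \<longrightarrow> flexible m n G) \<and>
         (\<forall>G. dual_convex m n G \<and> dual_affine_image m n F G \<longrightarrow> flexible m n G)"
proof -
  obtain Ft :: "real \<Rightarrow> nat \<Rightarrow> nat \<Rightarrow> pt" where all:
    "(\<forall>i\<le>m. \<forall>j\<le>n. continuous_on {0..1} (\<lambda>t. Ft t i j)) \<and>
     (\<forall>i\<le>m. \<forall>j\<le>n. Ft 0 i j = F i j) \<and>
     (\<forall>t\<in>{0..1}. is_net m n (Ft t)) \<and>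
     (\<forall>t\<in>{0..1}. \<forall>i<m. \<forall>j<n. \<exists>phi c1 c2 b.
            \<forall>(k, l) \<in> {(i, j), (Suc i, j), (Suc i, Suc j), (i, Suc j)}.
               Ft t k l = iso_cong phi c1 c2 b (F k l)) \<and>
     (\<forall>t\<in>{0..1}. \<forall>i j. interior_vertex m n i j \<longrightarrow>
            curvature (Ft t) i j = curvature F i j) \<and>
     \<not> (\<forall>t\<in>{0..1}. \<exists>phi c1 c2 b. \<forall>i\<le>m. \<forall>j\<le>n.
               Ft t i j = iso_cong phi c1 c2 b (F i j))"
    using assms(2) unfolding flexible_def by (rule exE) (erule that)
  note c = all[THEN conjunct1]
  note i = all[THEN conjunct2, THEN conjunct1]
  note ne = all[THEN conjunct2, THEN conjunct2, THEN conjunct1]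
  note fa = all[THEN conjunct2, THEN conjunct2, THEN conjunct2, THEN conjunct1]
  note cu = all[THEN conjunct2, THEN conjunct2, THEN conjunct2, THEN conjunct2, THEN conjunct1]
  note nt = all[THEN conjunct2, THEN conjunct2, THEN conjunct2, THEN conjunct2, THEN conjunct2]
  interpret fl: flexF m n F Ft
    using assms(1) c i ne fa cu by unfold_locales
  show ?thesis
  proof (intro conjI allI impI)
    fix G assume G: "dual_convex m n G \<and> combescure m n F G"
    interpret cg: combG m n F Ft G
      using G by unfold_locales auto
    show "flexible m n G" by (rule cg.comb_flexible[OF nt])
  next
    fix G assume G: "dual_convex m n G \<and> dual_affine_image m n F G"
    then obtain M where M: "dual_affine M"
      "\<forall>i\<le>m. \<forall>j\<le>n. (M *v hom (F i j)) $ 4 \<noteq> 0 \<and> G i j = dehom (M *v hom (F i j))"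
      unfolding dual_affine_image_def by blast
    interpret dg: daG m n F Ft G M
      using G M by unfold_locales auto
    show "flexible m n G" by (rule dg.da_flexible[OF nt])
  qed
qed


end
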